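(* Let $\eta,\zeta\in\mathcal B_\infty$. (1) $\eta\preceq\zeta$ if and only if (i) for all $a\in\pm\mathbb N$ with $a>\eta(a)$ we have $\eta(a)\ge\zeta(a)$, and (ii) for all $a,b\in\pm\mathbb N$ with $a<b$, $a>\zeta(a)$, $b>\zeta(b)$ and $\zeta(a)<\zeta(b)$, we have $\eta(a)<\eta(b)$. (2) $$\mathcal L(\zeta)=\sum_{a\in\pm\mathbb N:\ a>\zeta(a),\ 0>\zeta(a)}|\zeta(a)|\;-\;\#\{(a,b):0<a<b,\ a=\zeta(a),\ a>\zeta(b)\}\;-\;\#\{(a,b):a<b,\ a>\zeta(a),\ b>\zeta(b),\ \zeta(a)>\zeta(b)\}\;-\sum_{a:\ 0>a>\zeta(a)}|a|.$$
   Context: Write $\bar i:=-i$. $\mathcal B_n$: permutations $w$ of $\pm[n]$ with $w(\bar a)=\overline{w(a)}$; $\mathcal B_\infty=\bigcup_n\mathcal B_n$, acting on $\pm\mathbb N$ and fixing all but finitely many points. $\ell(w)=\#\{(i,j):0<i<j,w(i)>w(j)\}+\sum_{i>0,w(i)<0}|w(i)|$. $0$-Bruhat order $\le_0$ generated by covers $u\lessdot_0 w$: $\ell(w)=\ell(u)+1$, $u^{-1}w\in\{(\bar j,j),(\bar j,i)(\bar i,j):0<i<j\}$. For each $\zeta$ there exists $u$ with $u\le_0\zeta u$ and $\mathcal L(\zeta):=\ell(\zeta u)-\ell(u)$ is independent of such $u$. The Lagrangian order: $\eta\preceq\zeta$ iff there exists $u\in\mathcal B_\infty$ with $u\le_0\eta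 u\le_0\zeta u$. *)

theory Defs
  imports Main
begin

text \<open>Elements of B_infinity: signed permutations of the nonzero integers (= +-N),
  modelled as bijections of int that are odd (w(-a) = -w(a), hence w 0 = 0)
  and fix all but finitely many points.\<close>
definition signed_perm :: "(int \<Rightarrow> int) \<Rightarrow> bool" where
  "signed_perm w \<longleftrightarrow> bij w \<and> (\<forall>a. w (- a) = - w a) \<and> finite {a. w a \<noteq> a}"

definition blen :: "(int \<Rightarrow> int) \<Rightarrow> int" where
  "blen w = int (card {(i, j). 0 < i \<and> i < j \<and> w i > w j})
            + (\<Sum>i\<in>{i. 0 < i \<and> w i < 0}. \<bar>w i\<bar>)"

definition refl1 :: "int \<Rightarrow> int \<Rightarrow> int" where
  "refl1 j = (\<lambda>x. if x = j then - j else if x = - j then j else x)"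

definition refl2 :: "int \<Rightarrow> int \<Rightarrow> int \<Rightarrow> int" where
  "refl2 i j = (\<lambda>x. if x = - j then i else if x = i then - j
                    else if x = - i then j else if x = j then - i else x)"

text \<open>Covering relation of the 0-Bruhat order; products are compositions
  (u w)(a) = u(w(a)).\<close>
definition cover0 :: "(int \<Rightarrow> int) \<Rightarrow> (int \<Rightarrow> int) \<Rightarrow> bool" where
  "cover0 u w \<longleftrightarrow> signed_perm u \<and> signed_perm w \<and> blen w = blen u + 1 \<and>
     ((\<exists>j>0. inv u \<circ> w = refl1 j) \<or> (\<exists>i j. 0 < i \<and> i < j \<and> inv u \<circ> w = refl2 i j))"

definition bruhat0 :: "(int \<Rightarrow> int) \<Rightarrow> (int \<Rightarrow> int) \<Rightarrow> bool" where
  "bruhat0 u w \<longleftrightarrow> signed_perm u \<and> signed_perm w \<and> cover0\<^sup>*\<^sup>* u w"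

definition Lag :: "(int \<Rightarrow> int) \<Rightarrow> int" where
  "Lag \<zeta> = (SOME d. \<exists>u. signed_perm u \<and> bruhat0 u (\<zeta> \<circ> u) \<and> d = blen (\<zeta> \<circ> u) - blen u)"

definition lag_le :: "(int \<Rightarrow> int) \<Rightarrow> (int \<Rightarrow> int) \<Rightarrow> bool" where
  "lag_le \<eta> \<zeta> \<longleftrightarrow> (\<exists>u. signed_perm u \<and> bruhat0 u (\<eta> \<circ> u) \<and> bruhat0 (\<eta> \<circ> u) (\<zeta> \<circ> u))"

end

theory Submission
  imports Defs
begin


definition bnd :: "int \<Rightarrow> (int \<Rightarrow> int) \<Rightarrow> bool" where
  "bnd K f \<longleftrightarrow> (\<forall>v. K < \<bar>v\<bar> \<longrightarrow> f v = v)"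

definition PP :: "(int \<Rightarrow> int) \<Rightarrow> (int \<Rightarrow> int) \<Rightarrow> bool" where
  "PP u w \<longleftrightarrow> (\<forall>p>0. w p \<le> u p) \<and> (\<forall>a b. 0 < a \<and> a < b \<and> u a < u b \<longrightarrow> w a < w b)"

lemma sp_bij: "signed_perm w \<Longrightarrow> bij w" by (simp add: signed_perm_def)
lemma sp_inj: "signed_perm w \<Longrightarrow> inj w" by (simp add: signed_perm_def bij_def)
lemma sp_odd: "signed_perm w \<Longrightarrow> w (- a) = - w a" by (simp add: signed_perm_def)
lemma sp_fin: "signed_perm w \<Longrightarrow> finite {a. w a \<noteq> a}" by (simp add: signed_perm_def)
lemma sp_zero: "signed_perm w \<Longrightarrow> w 0 = 0"
  using sp_odd[of w 0] by simp
lemma sp_eq: "signed_perm w \<Longrightarrow> w a = w b \<longleftrightarrow> a = b"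
  using sp_inj by (auto dest: injD)
lemma sp_surj: "signed_perm w \<Longrightarrow> \<exists>a. w a = b"
  using sp_bij by (metis bij_pointE)
lemma sp_nz: "signed_perm w \<Longrightarrow> w a = 0 \<longleftrightarrow> a = 0"
  by (metis sp_eq sp_zero)

lemma sp_bnd: assumes "signed_perm w" shows "\<exists>K\<ge>0. bnd K w"
proof -
  let ?S = "{a. w a \<noteq> a}"
  have f: "finite ?S" using assms by (rule sp_fin)
  define K where "K = Max (insert 0 (abs ` ?S))"
  have "K \<ge> 0" unfolding K_def using f by simp
  moreover have "bnd K w" unfolding bnd_def
  proof (intro allI impI)
    fix v assume "K < \<bar>v\<bar>"
    show "w v = v"
    proof (rule ccontr)
      assume "w v \<noteq> v"
      then have "\<bar>v\<bar> \<le> K" unfolding K_def using f by (intro Max_ge) auto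
      with \<open>K < \<bar>v\<bar>\<close> show False by simp
    qed
  qed
  ultimately show ?thesis by blast
qed

lemma bnd_mono: "bnd K f \<Longrightarrow> K \<le> K' \<Longrightarrow> bnd K' f"
  unfolding bnd_def by auto

lemma bnd_window: assumes "signed_perm w" "bnd K w" "\<bar>v\<bar> \<le> K" shows "\<bar>w v\<bar> \<le> K"
proof (rule ccontr)
  assume "\<not> \<bar>w v\<bar> \<le> K"
  then have "w (w v) = w v" using assms(2) unfolding bnd_def by auto
  then have "w v = v" using sp_eq[OF assms(1)] by blast
  with \<open>\<not> \<bar>w v\<bar> \<le> K\<close> assms(3) show False by simp
qed

lemma sp_comp: assumes "signed_perm f" "signed_perm g" shows "signed_perm (f \<circ> g)"
proof -
  have "bij (f \<circ> g)" using assms by (simp add: sp_bij bij_comp)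
  moreover have "\<forall>a. (f \<circ> g) (- a) = - (f \<circ> g) a" using assms by (simp add: sp_odd)
  moreover have "finite {a. (f \<circ> g) a \<noteq> a}"
  proof -
    have "{a. (f \<circ> g) a \<noteq> a} \<subseteq> {a. g a \<noteq> a} \<union> {a. f a \<noteq> a}" by auto
    moreover have "finite ({a. g a \<noteq> a} \<union> {a. f a \<noteq> a})" using assms sp_fin by blast
    ultimately show ?thesis by (rule finite_subset)
  qed
  ultimately show ?thesis by (simp add: signed_perm_def)
qed

lemma sp_inv_l: "signed_perm f \<Longrightarrow> inv f (f a) = a"
  by (rule inv_f_f[OF sp_inj])
lemma sp_inv_r: "signed_perm f \<Longrightarrow> f (inv f a) = a"
  by (rule surj_f_inv_f[OF bij_is_surj[OF sp_bij]])

lemma sp_inv: assumes "signed_perm f" shows "signed_perm (inv f)"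
proof -
  have "bij (inv f)" using assms by (simp add: sp_bij bij_imp_bij_inv)
  moreover have "\<forall>a. inv f (- a) = - inv f a"
  proof
    fix a
    have "f (- inv f a) = - a" using assms by (simp add: sp_odd sp_inv_r)
    then have "inv f (f (- inv f a)) = inv f (- a)" by simp
    then show "inv f (- a) = - inv f a" using sp_inv_l[OF assms] by simp
  qed
  moreover have "{a. inv f a \<noteq> a} = {a. f a \<noteq> a}"
  proof (intro set_eqI iffI; simp)
    fix a assume "inv f a \<noteq> a" then show "f a \<noteq> a" using sp_inv_l[OF assms, of a] by metis
  next
    fix a assume "f a \<noteq> a" then show "inv f a \<noteq> a" using sp_inv_r[OF assms, of a] by metis
  qed
  then have "finite {a. inv f a \<noteq> a}" using assms sp_fin by simp
  ultimately show ?thesis by (simp add: signed_perm_def)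
qed


lemma sp_id: "signed_perm id" by (simp add: signed_perm_def)

lemma refl1_sp: "signed_perm (refl1 j)"
proof -
  have inv: "refl1 j \<circ> refl1 j = id" by (auto simp: refl1_def fun_eq_iff)
  have "bij (refl1 j)" by (rule o_bij[OF inv inv])
  moreover have "\<forall>a. refl1 j (- a) = - refl1 j a" by (auto simp: refl1_def)
  moreover have "finite {a. refl1 j a \<noteq> a}"
    by (rule finite_subset[of _ "{j, -j}"]) (auto simp: refl1_def)
  ultimately show ?thesis by (simp add: signed_perm_def)
qed

lemma refl2_sp: assumes "0 < i" "i < j" shows "signed_perm (refl2 i j)"
proof -
  have inv: "refl2 i j \<circ> refl2 i j = id" using assms by (auto simp: refl2_def fun_eq_iff)
  have "bij (refl2 i j)" by (rule o_bij[OF inv inv])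
  moreover have "\<forall>a. refl2 i j (- a) = - refl2 i j a" using assms by (auto simp: refl2_def)
  moreover have "finite {a. refl2 i j a \<noteq> a}"
    by (rule finite_subset[of _ "{i, -i, j, -j}"]) (auto simp: refl2_def)
  ultimately show ?thesis by (simp add: signed_perm_def)
qed

lemma refl1_invol: "f \<circ> refl1 j \<circ> refl1 j = f"
  by (auto simp: refl1_def fun_eq_iff)
lemma refl2_invol: "0 < i \<Longrightarrow> i < j \<Longrightarrow> f \<circ> refl2 i j \<circ> refl2 i j = f"
  by (auto simp: refl2_def fun_eq_iff)


definition invs :: "int \<Rightarrow> (int \<Rightarrow> int) \<Rightarrow> int" where
  "invs K f = (\<Sum>i\<in>{1..K}. \<Sum>k\<in>{1..K}. of_bool (i < k \<and> f k < f i))"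
definition negs :: "int \<Rightarrow> (int \<Rightarrow> int) \<Rightarrow> int" where
  "negs K f = (\<Sum>i\<in>{1..K}. (if f i < 0 then - f i else 0))"

lemma blen_win:
  assumes sp: "signed_perm w" and b: "bnd K w"
  shows "blen w = invs K w + negs K w"
proof -
  have S1: "{(i, j). 0 < i \<and> i < j \<and> w i > w j} = ({1..K} \<times> {1..K}) \<inter> {(i,j). i < j \<and> w j < w i}"
  proof (intro set_eqI iffI)
    fix x assume "x \<in> {(i, j). 0 < i \<and> i < j \<and> w i > w j}"
    then obtain i j where x: "x = (i,j)" "0 < i" "i < j" "w i > w j" by auto
    have "j \<le> K"
    proof (rule ccontr)
      assume "\<not> j \<le> K"
      then have wj: "w j = j" using b unfolding bnd_def by auto
      show False
      proof (cases "i \<le> K")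
        case True
        then have "\<bar>w i\<bar> \<le> K" using bnd_window[OF sp b, of i] x by simp
        then show False using wj x \<open>\<not> j \<le> K\<close> by simp
      next
        case False
        then have "w i = i" using b x unfolding bnd_def by auto
        then show False using wj x by simp
      qed
    qed
    then show "x \<in> ({1..K} \<times> {1..K}) \<inter> {(i,j). i < j \<and> w j < w i}" using x by auto
  qed auto
  have S2: "{i. 0 < i \<and> w i < 0} = {1..K} \<inter> {i. w i < 0}"
  proof (intro set_eqI iffI)
    fix i assume "i \<in> {i. 0 < i \<and> w i < 0}"
    then have i: "0 < i" "w i < 0" by auto
    have "i \<le> K"
    proof (rule ccontr)
      assume "\<not> i \<le> K" then have "w i = i" using b i unfolding bnd_def by auto
      then show False using i by simp
    qed
    then show "i \<in> {1..K} \<inter> {i. w i < 0}" using i by auto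
  qed auto
  have "int (card {(i, j). 0 < i \<and> i < j \<and> w i > w j}) = (\<Sum>x\<in>{1..K} \<times> {1..K}. of_bool (case x of (i,j) \<Rightarrow> i < j \<and> w j < w i))"
    unfolding S1 by (simp add: sum_of_bool_eq case_prod_beta Int_def)
  also have "\<dots> = invs K w" unfolding invs_def sum.cartesian_product
    by (rule sum.cong) (auto simp del: sum_of_bool_eq)
  finally have A: "int (card {(i, j). 0 < i \<and> i < j \<and> w i > w j}) = invs K w" .
  have "(\<Sum>i\<in>{i. 0 < i \<and> w i < 0}. \<bar>w i\<bar>) = (\<Sum>i\<in>{1..K}. (if w i < 0 then - w i else 0))"
    unfolding S2 by (simp add: sum.inter_filter[symmetric] Int_def)
  then show ?thesis unfolding blen_def A negs_def by simp
qed


lemma dsum1: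
  fixes d :: "int \<Rightarrow> int \<Rightarrow> int"
  assumes "finite A" "j \<in> A" "\<forall>i\<in>A. \<forall>k\<in>A. i \<noteq> j \<and> k \<noteq> j \<longrightarrow> d i k = 0" "d j j = 0"
  shows "(\<Sum>i\<in>A. \<Sum>k\<in>A. d i k) = (\<Sum>k\<in>A. d j k) + (\<Sum>i\<in>A. d i j)"
proof -
  have r: "(\<Sum>k\<in>A. d i k) = d i j" if "i \<in> A" "i \<noteq> j" for i
  proof -
    have "(\<Sum>k\<in>A. d i k) = d i j + (\<Sum>k\<in>A - {j}. d i k)" by (rule sum.remove[OF assms(1,2)])
    also have "(\<Sum>k\<in>A - {j}. d i k) = 0" using assms that by (intro sum.neutral) auto
    finally show ?thesis by simp
  qed
  have "(\<Sum>i\<in>A. \<Sum>k\<in>A. d i k) = (\<Sum>k\<in>A. d j k) + (\<Sum>i\<in>A - {j}. \<Sum>k\<in>A. d i k)"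
    by (rule sum.remove[OF assms(1,2)])
  also have "(\<Sum>i\<in>A - {j}. \<Sum>k\<in>A. d i k) = (\<Sum>i\<in>A - {j}. d i j)" using r by (intro sum.cong) auto
  also have "\<dots> = (\<Sum>i\<in>A. d i j)" using sum.remove[OF assms(1,2), of "\<lambda>i. d i j"] assms(4) by simp
  finally show ?thesis .
qed

lemma dsum2:
  fixes d :: "int \<Rightarrow> int \<Rightarrow> int"
  assumes "finite A" "p \<in> A" "q \<in> A" "p \<noteq> q"
    "\<forall>i\<in>A. \<forall>k\<in>A. i \<noteq> p \<and> i \<noteq> q \<and> k \<noteq> p \<and> k \<noteq> q \<longrightarrow> d i k = 0"
  shows "(\<Sum>i\<in>A. \<Sum>k\<in>A. d i k) = (\<Sum>k\<in>A. d p k + d q k) + (\<Sum>i\<in>A - {p, q}. d i p + d i q)"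
proof -
  have r: "(\<Sum>k\<in>A. d i k) = d i p + d i q" if "i \<in> A" "i \<noteq> p" "i \<noteq> q" for i
  proof -
    have "(\<Sum>k\<in>A. d i k) = d i p + (\<Sum>k\<in>A - {p}. d i k)" by (rule sum.remove[OF assms(1,2)])
    also have "(\<Sum>k\<in>A - {p}. d i k) = d i q + (\<Sum>k\<in>A - {p} - {q}. d i k)"
      using assms by (intro sum.remove) auto
    also have "(\<Sum>k\<in>A - {p} - {q}. d i k) = 0" using assms that by (intro sum.neutral) auto
    finally show ?thesis by simp
  qed
  have "(\<Sum>i\<in>A. \<Sum>k\<in>A. d i k) = (\<Sum>k\<in>A. d p k) + (\<Sum>i\<in>A - {p}. \<Sum>k\<in>A. d i k)"
    by (rule sum.remove[OF assms(1,2)])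
  also have "(\<Sum>i\<in>A - {p}. \<Sum>k\<in>A. d i k) = (\<Sum>k\<in>A. d q k) + (\<Sum>i\<in>A - {p} - {q}. \<Sum>k\<in>A. d i k)"
    using assms by (intro sum.remove) auto
  also have "(\<Sum>i\<in>A - {p} - {q}. \<Sum>k\<in>A. d i k) = (\<Sum>i\<in>A - {p, q}. d i p + d i q)"
    using r by (intro sum.cong) auto
  finally show ?thesis by (simp add: sum.distrib)
qed

lemma sp_window_image:
  assumes sp: "signed_perm u" and b: "bnd K u"
  shows "u ` ({-K..K} - {0}) = {-K..K} - {0}"
proof (intro set_eqI iffI)
  fix v assume "v \<in> u ` ({-K..K} - {0})"
  then obtain a where a: "a \<in> {-K..K} - {0}" "v = u a" by blast
  then have "\<bar>u a\<bar> \<le> K" using bnd_window[OF sp b, of a] by auto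
  moreover have "u a \<noteq> 0" using a sp_nz[OF sp] by auto
  ultimately show "v \<in> {-K..K} - {0}" using a by auto
next
  fix v assume v: "v \<in> {-K..K} - {0}"
  obtain a where a: "u a = v" using sp_surj[OF sp] by blast
  have "\<bar>a\<bar> \<le> K"
  proof (rule ccontr)
    assume "\<not> \<bar>a\<bar> \<le> K" then have "u a = a" using b unfolding bnd_def by auto
    then show False using a v \<open>\<not> \<bar>a\<bar> \<le> K\<close> by auto
  qed
  moreover have "a \<noteq> 0" using a v sp_zero[OF sp] by auto
  ultimately have "a \<in> {-K..K} - {0}" by auto
  then show "v \<in> u ` ({-K..K} - {0})" using a by blast
qed

lemma LC:
  assumes sp: "signed_perm u" and b: "bnd K u"
  shows "(\<Sum>k\<in>{1..K}. of_bool (Q (u k)) + of_bool (Q (- u k))) = (\<Sum>v\<in>{-K..K} - {0}. of_bool (Q v) :: int)"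
proof -
  have im: "uminus ` {1..K} = {-K..-1::int}"
  proof (intro set_eqI iffI)
    fix x :: int assume "x \<in> {-K..-1}" then show "x \<in> uminus ` {1..K}" by (intro image_eqI[of _ _ "-x"]) auto
  qed auto
  have e1: "(\<Sum>k\<in>{1..K}. of_bool (Q (- u k)) :: int) = (\<Sum>k\<in>{-K..-1}. of_bool (Q (u k)))"
  proof -
    have "(\<Sum>k\<in>{-K..-1}. of_bool (Q (u k)) :: int) = (\<Sum>k\<in>uminus ` {1..K}. of_bool (Q (u k)))" using im by simp
    also have "\<dots> = (\<Sum>k\<in>{1..K}. of_bool (Q (u (- k))))" by (subst sum.reindex) (auto simp: inj_on_def)
    also have "\<dots> = (\<Sum>k\<in>{1..K}. of_bool (Q (- u k)))" using sp_odd[OF sp] by simp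
    finally show ?thesis by simp
  qed
  have e2: "{-K..K} - {0} = {1..K} \<union> {-K..-1::int}" by auto
  have "(\<Sum>k\<in>{-K..K} - {0}. of_bool (Q (u k)) :: int) = (\<Sum>k\<in>{1..K}. of_bool (Q (u k))) + (\<Sum>k\<in>{-K..-1}. of_bool (Q (u k)))"
    unfolding e2 by (rule sum.union_disjoint) auto
  moreover have "(\<Sum>k\<in>{-K..K} - {0}. of_bool (Q (u k)) :: int) = (\<Sum>v\<in>{-K..K} - {0}. of_bool (Q v))"
  proof -
    have "inj_on u ({-K..K} - {0})" using sp_inj[OF sp] by (auto simp: inj_on_def dest: injD)
    then have "(\<Sum>v\<in>u ` ({-K..K} - {0}). of_bool (Q v) :: int) = (\<Sum>k\<in>{-K..K} - {0}. of_bool (Q (u k)))"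
      by (simp add: sum.reindex del: sum_of_bool_eq)
    then show ?thesis using sp_window_image[OF sp b] by simp
  qed
  ultimately show ?thesis using e1 by (simp add: sum.distrib del: sum_of_bool_eq)
qed


lemma card_abs_lt:
  assumes "1 \<le> m" "m \<le> K"
  shows "(\<Sum>v\<in>{-K..K} - {0}. of_bool (\<bar>v\<bar> < m) :: int) = 2 * (m - 1)"
proof -
  have "({-K..K} - {0}) \<inter> {v. \<bar>v\<bar> < m} = {-(m-1)..m-1} - {0}" using assms by auto
  moreover have "card ({-(m-1)..m-1} - {0::int}) = nat (2 * m - 2)" using assms by (simp add: card_Diff_singleton)
  ultimately show ?thesis using assms by simp
qed

lemma bnd_comp_refl1: assumes "bnd K u" "0 < j" "j \<le> K" shows "bnd K (u \<circ> refl1 j)"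
  using assms unfolding bnd_def refl1_def by auto

lemma bnd_comp_refl2: assumes "bnd K u" "0 < i" "i < j" "j \<le> K" shows "bnd K (u \<circ> refl2 i j)"
  using assms unfolding bnd_def refl2_def by auto

lemma R1:
  assumes sp: "signed_perm u" and b: "bnd K u" and j: "0 < j" "j \<le> K" and m: "u j > 0"
  shows "blen (u \<circ> refl1 j) = blen u + 2 * int (card {k. 0 < k \<and> k < j \<and> \<bar>u k\<bar> < u j}) + 1"
proof -
  define w where "w = u \<circ> refl1 j"
  define m where "m = u j"
  define A where "A = {1..K}"
  have fA: "finite A" and jA: "j \<in> A" using j by (auto simp: A_def)
  have sw: "signed_perm w" unfolding w_def by (rule sp_comp[OF sp refl1_sp])
  have bw: "bnd K w" unfolding w_def by (rule bnd_comp_refl1[OF b j])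
  have wk: "w k = u k" if "k \<in> A" "k \<noteq> j" for k using that j unfolding w_def refl1_def A_def by auto
  have wj: "w j = - m" unfolding w_def refl1_def m_def using sp_odd[OF sp] by simp
  have mK: "m \<le> K" using bnd_window[OF sp b, of j] j m_def by simp
  have um: "u k \<noteq> m \<and> u k \<noteq> - m" if "k \<in> A" "k \<noteq> j" for k
  proof -
    have "u k \<noteq> u j" using that sp_eq[OF sp] by simp
    moreover have "u k \<noteq> u (- j)" using that sp_eq[OF sp] j by (auto simp: A_def)
    ultimately show ?thesis using sp_odd[OF sp] m_def by simp
  qed
  have neg: "negs K w = negs K u + m"
  proof -
    have "negs K w = (if w j < 0 then - w j else 0) + (\<Sum>i\<in>A - {j}. (if w i < 0 then - w i else 0))"
      unfolding negs_def A_def[symmetric] by (rule sum.remove[OF fA jA])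
    also have "(\<Sum>i\<in>A - {j}. (if w i < 0 then - w i else 0)) = (\<Sum>i\<in>A - {j}. (if u i < 0 then - u i else 0))"
      using wk by (intro sum.cong) auto
    finally have 1: "negs K w = m + (\<Sum>i\<in>A - {j}. (if u i < 0 then - u i else 0))" using wj m m_def by simp
    have "negs K u = (if u j < 0 then - u j else 0) + (\<Sum>i\<in>A - {j}. (if u i < 0 then - u i else 0))"
      unfolding negs_def A_def[symmetric] by (rule sum.remove[OF fA jA])
    then show ?thesis using 1 m by simp
  qed
  define d where "d i k = of_bool (i < k \<and> w k < w i) - (of_bool (i < k \<and> u k < u i) :: int)" for i k
  have "invs K w - invs K u = (\<Sum>i\<in>A. \<Sum>k\<in>A. d i k)"
    unfolding invs_def d_def A_def[symmetric] by (simp add: sum_subtractf del: sum_of_bool_eq)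
  also have "\<dots> = (\<Sum>k\<in>A. d j k) + (\<Sum>i\<in>A. d i j)"
    by (rule dsum1[OF fA jA]) (auto simp: d_def wk)
  also have "(\<Sum>k\<in>A. d j k) = - (\<Sum>k\<in>A. of_bool (j < k \<and> \<bar>u k\<bar> < m))"
  proof -
    have "d j k = - of_bool (j < k \<and> \<bar>u k\<bar> < m)" if "k \<in> A" for k
    proof (cases "k = j")
      case True then show ?thesis by (simp add: d_def)
    next
      case False
      then show ?thesis using um[OF that False] wk[OF that False] wj m_def assms(5) by (auto simp: d_def)
    qed
    then show ?thesis by (simp add: sum_negf del: sum_of_bool_eq)
  qed
  also have "(\<Sum>i\<in>A. d i j) = (\<Sum>k\<in>A. of_bool (k < j \<and> \<bar>u k\<bar> < m))"
  proof -
    have "d k j = of_bool (k < j \<and> \<bar>u k\<bar> < m)" if "k \<in> A" for k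
    proof (cases "k = j")
      case True then show ?thesis by (simp add: d_def)
    next
      case False
      then show ?thesis using um[OF that False] wk[OF that False] wj m_def assms(5) by (auto simp: d_def)
    qed
    then show ?thesis by (intro sum.cong) auto
  qed
  finally have inv: "invs K w - invs K u = (\<Sum>k\<in>A. of_bool (k < j \<and> \<bar>u k\<bar> < m)) - (\<Sum>k\<in>A. of_bool (j < k \<and> \<bar>u k\<bar> < m))"
    by simp
  have tot: "(\<Sum>k\<in>A. of_bool (\<bar>u k\<bar> < m) :: int) = m - 1"
  proof -
    have "(\<Sum>k\<in>A. of_bool (\<bar>u k\<bar> < m) + of_bool (\<bar>- u k\<bar> < m) :: int) = (\<Sum>v\<in>{-K..K} - {0}. of_bool (\<bar>v\<bar> < m))"
      unfolding A_def by (rule LC[OF sp b])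
    also have "\<dots> = 2 * (m - 1)" using card_abs_lt[of m K] assms(5) m_def mK by simp
    finally show ?thesis by (simp add: sum_distrib_left[symmetric] del: sum_of_bool_eq)
  qed
  have split: "(\<Sum>k\<in>A. of_bool (\<bar>u k\<bar> < m) :: int) = (\<Sum>k\<in>A. of_bool (k < j \<and> \<bar>u k\<bar> < m)) + (\<Sum>k\<in>A. of_bool (j < k \<and> \<bar>u k\<bar> < m))"
  proof -
    have "of_bool (\<bar>u k\<bar> < m) = of_bool (k < j \<and> \<bar>u k\<bar> < m) + (of_bool (j < k \<and> \<bar>u k\<bar> < m) :: int)" for k
      using m_def by (cases "k = j") auto
    then show ?thesis by (simp add: sum.distrib[symmetric] del: sum_of_bool_eq)
  qed
  have cardA: "(\<Sum>k\<in>A. of_bool (k < j \<and> \<bar>u k\<bar> < m) :: int) = int (card {k. 0 < k \<and> k < j \<and> \<bar>u k\<bar> < u j})"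
  proof -
    have "A \<inter> {k. k < j \<and> \<bar>u k\<bar> < m} = {k. 0 < k \<and> k < j \<and> \<bar>u k\<bar> < u j}"
      using j unfolding A_def m_def by auto
    then show ?thesis using fA by simp
  qed
  have "blen w = invs K w + negs K w" by (rule blen_win[OF sw bw])
  moreover have "blen u = invs K u + negs K u" by (rule blen_win[OF sp b])
  ultimately show ?thesis using inv neg tot split cardA unfolding w_def by linarith
qed


lemma sum_rm2:
  fixes f :: "int \<Rightarrow> int"
  assumes "finite A" "p \<in> A" "q \<in> A" "p \<noteq> q"
  shows "sum f A = f p + f q + sum f (A - {p, q})"
proof -
  have "sum f A = f p + sum f (A - {p})" by (rule sum.remove[OF assms(1,2)])
  also have "sum f (A - {p}) = f q + sum f (A - {p} - {q})" using assms by (intro sum.remove) auto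
  finally show ?thesis by (simp add: insert_commute Diff_insert2[symmetric])
qed

lemma R2gen:
  assumes sp: "signed_perm u" and b: "bnd K u" and pq: "0 < p" "p < q" "q \<le> K" and pos: "u p + u q > 0"
  shows "blen (u \<circ> refl2 p q) = blen u + (u p + u q)
     - (\<Sum>k\<in>{1..K} - {p, q}. of_bool (- u q < u k \<and> u k < u p) + of_bool (- u p < u k \<and> u k < u q))
     + 2 * (\<Sum>k\<in>{1..K}. of_bool (k < p \<and> - u q < u k \<and> u k < u p) + of_bool (k < p \<and> - u p < u k \<and> u k < u q))
     + 2 * (\<Sum>k\<in>{1..K}. of_bool (p < k \<and> k < q \<and> - u p < u k \<and> u k < u q))"
proof -
  define w where "w = u \<circ> refl2 p q"
  define A where "A = {1..K}"
  define \<alpha> where "\<alpha> = u p"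
  define \<beta> where "\<beta> = u q"
  have fA: "finite A" and pA: "p \<in> A" and qA: "q \<in> A" and pnq: "p \<noteq> q" using pq by (auto simp: A_def)
  have sw: "signed_perm w" unfolding w_def by (rule sp_comp[OF sp refl2_sp[OF pq(1,2)]])
  have bw: "bnd K w" unfolding w_def by (rule bnd_comp_refl2[OF b pq])
  have wk: "w k = u k" if "k \<in> A" "k \<noteq> p" "k \<noteq> q" for k using that pq unfolding w_def refl2_def A_def by auto
  have wp: "w p = - \<beta>" unfolding w_def refl2_def \<beta>_def using pq sp_odd[OF sp] by simp
  have wq: "w q = - \<alpha>" unfolding w_def refl2_def \<alpha>_def using pq sp_odd[OF sp] by simp
  have uk: "u k \<noteq> \<alpha> \<and> u k \<noteq> - \<alpha> \<and> u k \<noteq> \<beta> \<and> u k \<noteq> - \<beta>" if "k \<in> A" "k \<noteq> p" "k \<noteq> q" for k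
  proof -
    have "u k \<noteq> u p" "u k \<noteq> u q" "u k \<noteq> u (- p)" "u k \<noteq> u (- q)"
      using that sp_eq[OF sp] pq by (auto simp: A_def)
    then show ?thesis using sp_odd[OF sp] \<alpha>_def \<beta>_def by simp
  qed
  have neg: "negs K w = negs K u + \<alpha> + \<beta>"
  proof -
    let ?g = "\<lambda>f i. (if f i < 0 then - f i else (0::int))"
    have "negs K w = ?g w p + ?g w q + sum (?g w) (A - {p, q})"
      unfolding negs_def A_def[symmetric] by (rule sum_rm2[OF fA pA qA pnq])
    moreover have "negs K u = ?g u p + ?g u q + sum (?g u) (A - {p, q})"
      unfolding negs_def A_def[symmetric] by (rule sum_rm2[OF fA pA qA pnq])
    moreover have "sum (?g w) (A - {p, q}) = sum (?g u) (A - {p, q})"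
      using wk by (intro sum.cong) auto
    ultimately show ?thesis using wp wq \<alpha>_def \<beta>_def by auto
  qed
  define d where "d i k = of_bool (i < k \<and> w k < w i) - (of_bool (i < k \<and> u k < u i) :: int)" for i k
  define i1 where "i1 k = (of_bool (- \<beta> < u k \<and> u k < \<alpha>) :: int)" for k
  define i2 where "i2 k = (of_bool (- \<alpha> < u k \<and> u k < \<beta>) :: int)" for k
  define g where "g k = - (i1 k + i2 k) + 2 * (of_bool (k < p \<and> - \<beta> < u k \<and> u k < \<alpha>) + of_bool (k < p \<and> - \<alpha> < u k \<and> u k < \<beta>))
      + 2 * (of_bool (p < k \<and> k < q \<and> - \<alpha> < u k \<and> u k < \<beta>))" for k
  have "invs K w - invs K u = (\<Sum>i\<in>A. \<Sum>k\<in>A. d i k)"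
    unfolding invs_def d_def A_def[symmetric] by (simp add: sum_subtractf del: sum_of_bool_eq)
  also have "\<dots> = (\<Sum>k\<in>A. d p k + d q k) + (\<Sum>i\<in>A - {p, q}. d i p + d i q)"
    by (rule dsum2[OF fA pA qA pnq]) (auto simp: d_def wk)
  also have "(\<Sum>k\<in>A. d p k + d q k) = (\<Sum>k\<in>A - {p, q}. d p k + d q k)"
  proof -
    have "d p p + d q p = 0" "d p q + d q q = 0" using wp wq pq by (auto simp: d_def \<alpha>_def \<beta>_def)
    then show ?thesis using sum_rm2[OF fA pA qA pnq, of "\<lambda>k. d p k + d q k"] by simp
  qed
  also have "(\<Sum>k\<in>A - {p, q}. d p k + d q k) + (\<Sum>i\<in>A - {p, q}. d i p + d i q) = (\<Sum>k\<in>A - {p, q}. g k)"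
  proof -
    have "d p k + d q k + (d k p + d k q) = g k" if "k \<in> A - {p, q}" for k
    proof -
      have k: "k \<in> A" "k \<noteq> p" "k \<noteq> q" using that by auto
      note e = uk[OF k] wk[OF k]
      show ?thesis using e wp wq pos pq unfolding d_def g_def i1_def i2_def \<alpha>_def \<beta>_def
        by (auto simp: of_bool_def)
    qed
    then show ?thesis by (simp add: sum.distrib[symmetric] del: sum_of_bool_eq)
  qed
  finally have inv: "invs K w - invs K u = (\<Sum>k\<in>A - {p, q}. g k)" .
  have g0: "(\<Sum>k\<in>A - {p, q}. g k) = - (\<Sum>k\<in>A - {p, q}. i1 k + i2 k)
      + 2 * (\<Sum>k\<in>A. of_bool (k < p \<and> - \<beta> < u k \<and> u k < \<alpha>) + of_bool (k < p \<and> - \<alpha> < u k \<and> u k < \<beta>))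
      + 2 * (\<Sum>k\<in>A. of_bool (p < k \<and> k < q \<and> - \<alpha> < u k \<and> u k < \<beta>))"
  proof -
    have x: "(\<Sum>k\<in>A. of_bool (k < p \<and> - \<beta> < u k \<and> u k < \<alpha>) + of_bool (k < p \<and> - \<alpha> < u k \<and> u k < \<beta>) :: int)
       = (\<Sum>k\<in>A - {p, q}. of_bool (k < p \<and> - \<beta> < u k \<and> u k < \<alpha>) + of_bool (k < p \<and> - \<alpha> < u k \<and> u k < \<beta>))"
      using sum_rm2[OF fA pA qA pnq, of "\<lambda>k. of_bool (k < p \<and> - \<beta> < u k \<and> u k < \<alpha>) + of_bool (k < p \<and> - \<alpha> < u k \<and> u k < \<beta>)"] pq
      by (simp del: sum_of_bool_eq)
    have y: "(\<Sum>k\<in>A. of_bool (p < k \<and> k < q \<and> - \<alpha> < u k \<and> u k < \<beta>) :: int)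
       = (\<Sum>k\<in>A - {p, q}. of_bool (p < k \<and> k < q \<and> - \<alpha> < u k \<and> u k < \<beta>))"
      using sum_rm2[OF fA pA qA pnq, of "\<lambda>k. of_bool (p < k \<and> k < q \<and> - \<alpha> < u k \<and> u k < \<beta>)"] pq
      by (simp del: sum_of_bool_eq)
    show ?thesis unfolding x y g_def
      by (simp add: sum.distrib sum_distrib_left sum_negf sum_subtractf del: sum_of_bool_eq)
  qed
  have "blen w = invs K w + negs K w" by (rule blen_win[OF sw bw])
  moreover have "blen u = invs K u + negs K u" by (rule blen_win[OF sp b])
  ultimately show ?thesis using inv neg g0 unfolding w_def[symmetric] A_def[symmetric] i1_def i2_def \<alpha>_def \<beta>_def
    by linarith
qed


lemma T_eval:
  assumes sp: "signed_perm u" and b: "bnd K u" and pq: "0 < p" "p < q" "q \<le> K" and pos: "u p + u q > 0"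
  shows "(\<Sum>k\<in>{1..K} - {p, q}. of_bool (- u q < u k \<and> u k < u p) + of_bool (- u p < u k \<and> u k < u q) :: int)
     = int (card (({-K..K} - {0}) \<inter> {v. - u q < v \<and> v < u p}))
       - of_bool (- u p < u p \<and> u p < u q) - of_bool (- u q < u q \<and> u q < u p)"
proof -
  define A where "A = {1..K}"
  have fA: "finite A" and pA: "p \<in> A" and qA: "q \<in> A" and pnq: "p \<noteq> q" using pq by (auto simp: A_def)
  let ?f = "\<lambda>k. of_bool (- u q < u k \<and> u k < u p) + (of_bool (- u p < u k \<and> u k < u q) :: int)"
  have "(\<Sum>k\<in>A. ?f k) = (\<Sum>k\<in>A. of_bool (- u q < u k \<and> u k < u p) + of_bool (- u q < - u k \<and> - u k < u p))"
    by (intro sum.cong) auto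
  also have "\<dots> = (\<Sum>v\<in>{-K..K} - {0}. of_bool (- u q < v \<and> v < u p))"
    unfolding A_def by (rule LC[OF sp b])
  finally have 1: "(\<Sum>k\<in>A. ?f k) = int (card (({-K..K} - {0}) \<inter> {v. - u q < v \<and> v < u p}))" by simp
  have 2: "(\<Sum>k\<in>A. ?f k) = ?f p + ?f q + (\<Sum>k\<in>A - {p, q}. ?f k)" by (rule sum_rm2[OF fA pA qA pnq])
  show ?thesis using 1 2 unfolding A_def by simp
qed

lemma R2mix:
  assumes sp: "signed_perm u" and b: "bnd K u" and pq: "0 < p" "p < q" "q \<le> K" and pos: "u p + u q > 0"
    and mix: "u p < 0 \<or> u q < 0"
  shows "blen (u \<circ> refl2 p q) = blen u + 1
     + 2 * (\<Sum>k\<in>{1..K}. of_bool (k < p \<and> - u q < u k \<and> u k < u p) + of_bool (k < p \<and> - u p < u k \<and> u k < u q))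
     + 2 * (\<Sum>k\<in>{1..K}. of_bool (p < k \<and> k < q \<and> - u p < u k \<and> u k < u q))"
proof -
  have ap: "\<bar>u p\<bar> \<le> K" "\<bar>u q\<bar> \<le> K" using bnd_window[OF sp b, of p] bnd_window[OF sp b, of q] pq by auto
  have "({-K..K} - {0}) \<inter> {v. - u q < v \<and> v < u p} = {- u q<..<u p}" using ap mix pos by auto
  then have c: "int (card (({-K..K} - {0}) \<inter> {v. - u q < v \<and> v < u p})) = u p + u q - 1" using pos by simp
  have n: "\<not> (- u p < u p \<and> u p < u q)" "\<not> (- u q < u q \<and> u q < u p)" using mix by auto
  show ?thesis using R2gen[OF assms(1-6)] T_eval[OF assms(1-6)] c n by (simp del: sum_of_bool_eq)
qed

lemma R2pos:
  assumes sp: "signed_perm u" and b: "bnd K u" and pq: "0 < p" "p < q" "q \<le> K"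
    and pos: "u p > 0" "u q > 0"
  shows "blen (u \<circ> refl2 p q) \<ge> blen u + 3"
proof -
  have pos': "u p + u q > 0" using pos by simp
  have ap: "\<bar>u p\<bar> \<le> K" "\<bar>u q\<bar> \<le> K" using bnd_window[OF sp b, of p] bnd_window[OF sp b, of q] pq by auto
  have "({-K..K} - {0}) \<inter> {v. - u q < v \<and> v < u p} = {- u q<..<u p} - {0}" using ap pos by auto
  then have c: "int (card (({-K..K} - {0}) \<inter> {v. - u q < v \<and> v < u p})) = u p + u q - 2" using pos
    by (simp add: card_Diff_singleton)
  have ne: "u p \<noteq> u q" using sp_eq[OF sp] pq by simp
  have "(\<Sum>k\<in>{1..K}. of_bool (k < p \<and> - u q < u k \<and> u k < u p) + of_bool (k < p \<and> - u p < u k \<and> u k < u q) :: int) \<ge> 0"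
    by (intro sum_nonneg) auto
  moreover have "(\<Sum>k\<in>{1..K}. of_bool (p < k \<and> k < q \<and> - u p < u k \<and> u k < u q) :: int) \<ge> 0"
    by (intro sum_nonneg) auto
  ultimately show ?thesis using R2gen[OF assms(1-5) pos'] T_eval[OF assms(1-5) pos'] c pos ne
    by (cases "u p < u q") (simp_all del: sum_of_bool_eq)
qed


lemma sp_bnd_ge: assumes "signed_perm u" shows "\<exists>K. K \<ge> j \<and> K \<ge> 0 \<and> bnd K u"
proof -
  obtain K where "K \<ge> 0" "bnd K u" using sp_bnd[OF assms] by blast
  then show ?thesis by (intro exI[of _ "max K j"]) (auto intro: bnd_mono)
qed

lemma inv_comp_eq: assumes "signed_perm u" "inv u \<circ> w = t" shows "w = u \<circ> t"
proof
  fix x have "u (inv u (w x)) = w x" by (rule sp_inv_r[OF assms(1)])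
  then show "w x = (u \<circ> t) x" using assms(2) by (metis comp_apply)
qed

lemma inv_comp_cancel: assumes "signed_perm u" shows "inv u \<circ> (u \<circ> t) = t"
  using sp_inv_l[OF assms] by (auto simp: fun_eq_iff)

lemma sum_zero_nonneg:
  fixes f :: "int \<Rightarrow> int"
  assumes "finite A" "(\<Sum>k\<in>A. f k) = 0" "\<forall>k\<in>A. f k \<ge> 0" "k \<in> A" shows "f k = 0"
  using assms sum_nonneg_eq_0_iff by blast

lemma PP_refl: "PP u u" by (simp add: PP_def)
lemma PP_trans: "PP u v \<Longrightarrow> PP v w \<Longrightarrow> PP u w" unfolding PP_def by (meson order_trans)

lemma refl1_vals: "k \<noteq> j \<Longrightarrow> k \<noteq> - j \<Longrightarrow> (u \<circ> refl1 j) k = u k" "(u \<circ> refl1 j) j = u (- j)"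
  by (auto simp: refl1_def)
lemma refl2_vals: "0 < p \<Longrightarrow> p < q \<Longrightarrow> k \<noteq> p \<Longrightarrow> k \<noteq> q \<Longrightarrow> k \<noteq> - p \<Longrightarrow> k \<noteq> - q \<Longrightarrow> (u \<circ> refl2 p q) k = u k"
  "0 < p \<Longrightarrow> p < q \<Longrightarrow> (u \<circ> refl2 p q) p = u (- q)"
  "0 < p \<Longrightarrow> p < q \<Longrightarrow> (u \<circ> refl2 p q) q = u (- p)"
  by (auto simp: refl2_def)

lemma PP_refl1:
  assumes sp: "signed_perm u" and j: "0 < j" and m: "u j > 0" and e: "\<forall>k. 0 < k \<and> k < j \<longrightarrow> \<bar>u k\<bar> \<ge> u j"
  shows "PP u (u \<circ> refl1 j)"
proof -
  let ?w = "u \<circ> refl1 j"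
  have wj: "?w j = - u j" using refl1_vals(2)[of u j] sp_odd[OF sp] by simp
  have wk: "?w k = u k" if "k > 0" "k \<noteq> j" for k using refl1_vals(1)[of k j u] that j by simp
  show ?thesis unfolding PP_def
  proof (intro conjI allI impI)
    fix p :: int assume "p > 0" then show "?w p \<le> u p" using wj wk m by (cases "p = j") auto
  next
    fix a b :: int assume ab: "0 < a \<and> a < b \<and> u a < u b"
    show "?w a < ?w b"
    proof (cases "b = j")
      case True
      then have "\<bar>u a\<bar> \<ge> u j" using e ab by auto
      moreover have "u a \<noteq> - u j" using sp_eq[OF sp, of a "-j"] sp_odd[OF sp, of j] ab j by auto
      ultimately show ?thesis using True ab wj wk[of a] by auto
    next
      case False
      then show ?thesis using ab wj wk m by (cases "a = j") auto
    qed
  qed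
qed

lemma PP_refl2:
  assumes sp: "signed_perm u" and pq: "0 < p" "p < q" and pos: "u p + u q > 0"
    and X: "\<forall>k. 0 < k \<and> k < p \<longrightarrow> \<not> (- u q < u k \<and> u k < u p) \<and> \<not> (- u p < u k \<and> u k < u q)"
    and Y: "\<forall>k. p < k \<and> k < q \<longrightarrow> \<not> (- u p < u k \<and> u k < u q)"
  shows "PP u (u \<circ> refl2 p q)"
proof -
  let ?w = "u \<circ> refl2 p q"
  have wp: "?w p = - u q" using refl2_vals(2)[OF pq, of u] sp_odd[OF sp] by simp
  have wq: "?w q = - u p" using refl2_vals(3)[OF pq, of u] sp_odd[OF sp] by simp
  have wk: "?w k = u k" if "k > 0" "k \<noteq> p" "k \<noteq> q" for k using refl2_vals(1)[OF pq, of k u] that pq by simp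
  have ne: "u k \<noteq> - u q" "u k \<noteq> - u p" if "k > 0" for k
    using sp_eq[OF sp, of k "-q"] sp_eq[OF sp, of k "-p"] sp_odd[OF sp, of q] sp_odd[OF sp, of p] that pq by auto
  show ?thesis unfolding PP_def
  proof (intro conjI allI impI)
    fix k :: int assume "k > 0" then show "?w k \<le> u k" using wp wq wk pos by (cases "k = p"; cases "k = q") auto
  next
    fix a b :: int assume ab: "0 < a \<and> a < b \<and> u a < u b"
    have nea: "u a \<noteq> - u q" "u a \<noteq> - u p" using ne ab by auto
    have neb: "u b \<noteq> - u q" "u b \<noteq> - u p" using ne[of b] ab by auto
    show "?w a < ?w b"
    proof (cases "a = p")
      case True
      then show ?thesis using ab wp wq wk[of b] pos by (cases "b = q") auto
    next
      case ap: False
      show ?thesis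
      proof (cases "a = q")
        case True
        then show ?thesis using ab wq wk[of b] pos pq by auto
      next
        case aq: False
        show ?thesis
        proof (cases "b = p")
          case True
          then have "\<not> (- u q < u a \<and> u a < u p)" using X ab by auto
          then show ?thesis using True ab wp wk[of a] ap aq nea by auto
        next
          case bp: False
          show ?thesis
          proof (cases "b = q")
            case True
            have "\<not> (- u p < u a \<and> u a < u q)"
            proof (cases "a < p")
              case True then show ?thesis using X ab by auto
            next
              case False then show ?thesis using Y ab ap \<open>b = q\<close> by auto
            qed
            then show ?thesis using True ab wq wk[of a] ap aq nea by auto
          next
            case False
            then show ?thesis using ab wk[of a] wk[of b] ap aq bp by auto
          qed
        qed
      qed
    qed
  qed
qed


lemma cover_refl1_PP:
  assumes sp: "signed_perm u" and j: "0 < j" and len: "blen (u \<circ> refl1 j) = blen u + 1"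
  shows "PP u (u \<circ> refl1 j)"
proof -
  obtain K where K: "K \<ge> j" "K \<ge> 0" "bnd K u" using sp_bnd_ge[OF sp] by blast
  have "u j \<noteq> 0" using sp_nz[OF sp] j by simp
  show ?thesis
  proof (cases "u j > 0")
    case True
    have "int (card {k. 0 < k \<and> k < j \<and> \<bar>u k\<bar> < u j}) = 0" using R1[OF sp K(3) j K(1) True] len by simp
    moreover have "finite {k. 0 < k \<and> k < j \<and> \<bar>u k\<bar> < u j}" by (rule finite_subset[of _ "{0..j}"]) auto
    ultimately have "{k. 0 < k \<and> k < j \<and> \<bar>u k\<bar> < u j} = {}" by simp
    then have "\<forall>k. 0 < k \<and> k < j \<longrightarrow> \<bar>u k\<bar> \<ge> u j" by auto
    then show ?thesis by (rule PP_refl1[OF sp j True])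
  next
    case False
    let ?w = "u \<circ> refl1 j"
    have sw: "signed_perm ?w" by (rule sp_comp[OF sp refl1_sp])
    have bw: "bnd K ?w" by (rule bnd_comp_refl1[OF K(3) j K(1)])
    have "?w j > 0" using refl1_vals(2)[of u j] sp_odd[OF sp] False \<open>u j \<noteq> 0\<close> by simp
    note r = R1[OF sw bw j K(1) this]
    have "blen (?w \<circ> refl1 j) \<ge> blen ?w + 1" using r of_nat_0_le_iff by linarith
    moreover have "?w \<circ> refl1 j = u" by (rule refl1_invol)
    ultimately show ?thesis using len by simp
  qed
qed

lemma cover_refl2_PP:
  assumes sp: "signed_perm u" and pq: "0 < p" "p < q" and len: "blen (u \<circ> refl2 p q) = blen u + 1"
  shows "PP u (u \<circ> refl2 p q)"
proof -
  obtain K where K: "K \<ge> q" "K \<ge> 0" "bnd K u" using sp_bnd_ge[OF sp] by blast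
  let ?w = "u \<circ> refl2 p q"
  have sw: "signed_perm ?w" by (rule sp_comp[OF sp refl2_sp[OF pq]])
  have bw: "bnd K ?w" by (rule bnd_comp_refl2[OF K(3) pq K(1)])
  have wp: "?w p = - u q" using refl2_vals(2)[OF pq, of u] sp_odd[OF sp] by simp
  have wq: "?w q = - u p" using refl2_vals(3)[OF pq, of u] sp_odd[OF sp] by simp
  have inv: "?w \<circ> refl2 p q = u" by (rule refl2_invol[OF pq])
  have nz: "u p + u q \<noteq> 0" using sp_eq[OF sp, of p "-q"] sp_odd[OF sp, of q] pq by auto
  have nz1: "u p \<noteq> 0" "u q \<noteq> 0" using sp_nz[OF sp] pq by auto
  show ?thesis
  proof (cases "u p + u q > 0")
    case pos: True
    show ?thesis
    proof (cases "u p > 0 \<and> u q > 0")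
      case True
      then show ?thesis using R2pos[OF sp K(3) pq K(1)] len by simp
    next
      case False
      then have mix: "u p < 0 \<or> u q < 0" using nz1 by auto
      let ?X = "(\<Sum>k\<in>{1..K}. of_bool (k < p \<and> - u q < u k \<and> u k < u p) + of_bool (k < p \<and> - u p < u k \<and> u k < u q) :: int)"
      let ?Y = "(\<Sum>k\<in>{1..K}. of_bool (p < k \<and> k < q \<and> - u p < u k \<and> u k < u q) :: int)"
      have X0: "?X \<ge> 0" "?Y \<ge> 0" by (auto intro!: sum_nonneg)
      have "?X = 0" "?Y = 0" using R2mix[OF sp K(3) pq K(1) pos mix] len X0 by (simp_all del: sum_of_bool_eq)
      have X: "\<forall>k. 0 < k \<and> k < p \<longrightarrow> \<not> (- u q < u k \<and> u k < u p) \<and> \<not> (- u p < u k \<and> u k < u q)"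
      proof (intro allI impI)
        fix k assume k: "0 < k \<and> k < p"
        then have "k \<in> {1..K}" using pq K by auto
        from sum_zero_nonneg[OF _ \<open>?X = 0\<close> _ this] show "\<not> (- u q < u k \<and> u k < u p) \<and> \<not> (- u p < u k \<and> u k < u q)"
          using k by (auto simp: of_bool_def split: if_splits simp del: sum_of_bool_eq)
      qed
      have Y: "\<forall>k. p < k \<and> k < q \<longrightarrow> \<not> (- u p < u k \<and> u k < u q)"
      proof (intro allI impI)
        fix k assume k: "p < k \<and> k < q"
        then have "k \<in> {1..K}" using pq K by auto
        from sum_zero_nonneg[OF _ \<open>?Y = 0\<close> _ this] show "\<not> (- u p < u k \<and> u k < u q)"
          using k by (auto simp del: sum_of_bool_eq)
      qed
      show ?thesis by (rule PP_refl2[OF sp pq pos X Y])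
    qed
  next
    case False
    then have pos': "?w p + ?w q > 0" using wp wq nz by simp
    show ?thesis
    proof (cases "?w p > 0 \<and> ?w q > 0")
      case True
      then show ?thesis using R2pos[OF sw bw pq K(1)] len inv by simp
    next
      case False
      have "?w p \<noteq> 0" "?w q \<noteq> 0" using wp wq nz1 by auto
      then have mix: "?w p < 0 \<or> ?w q < 0" using False by auto
      let ?X = "(\<Sum>k\<in>{1..K}. of_bool (k < p \<and> - ?w q < ?w k \<and> ?w k < ?w p) + of_bool (k < p \<and> - ?w p < ?w k \<and> ?w k < ?w q) :: int)"
      let ?Y = "(\<Sum>k\<in>{1..K}. of_bool (p < k \<and> k < q \<and> - ?w p < ?w k \<and> ?w k < ?w q) :: int)"
      have X0: "?X \<ge> 0" "?Y \<ge> 0" by (auto intro!: sum_nonneg)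
      note r = R2mix[OF sw bw pq K(1) pos' mix]
      have "blen (?w \<circ> refl2 p q) \<ge> blen ?w + 1" using r X0 by linarith
      then have False using inv len by simp
      then show ?thesis ..
    qed
  qed
qed

lemma cover_PP: assumes "cover0 u w" shows "PP u w"
proof -
  have sp: "signed_perm u" and len: "blen w = blen u + 1" using assms by (auto simp: cover0_def)
  from assms consider (a) j where "j > 0" "inv u \<circ> w = refl1 j" | (b) i j where "0 < i" "i < j" "inv u \<circ> w = refl2 i j"
    unfolding cover0_def by blast
  then show ?thesis
  proof cases
    case a
    then have "w = u \<circ> refl1 j" using inv_comp_eq[OF sp] by blast
    then show ?thesis using cover_refl1_PP[OF sp a(1)] len by simp
  next
    case b
    then have "w = u \<circ> refl2 i j" using inv_comp_eq[OF sp] by blast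
    then show ?thesis using cover_refl2_PP[OF sp b(1,2)] len by simp
  qed
qed

lemma bruhat0_PP: assumes "bruhat0 u w" shows "PP u w"
proof -
  have "cover0\<^sup>*\<^sup>* u w" using assms by (simp add: bruhat0_def)
  then show ?thesis
    by (induction rule: rtranclp_induct) (auto intro: PP_refl PP_trans cover_PP)
qed


lemma cover_refl1_mk:
  assumes sp: "signed_perm u" and j: "0 < j" and m: "u j > 0" and e: "\<forall>k. 0 < k \<and> k < j \<longrightarrow> \<bar>u k\<bar> \<ge> u j"
  shows "cover0 u (u \<circ> refl1 j)"
proof -
  obtain K where K: "K \<ge> j" "K \<ge> 0" "bnd K u" using sp_bnd_ge[OF sp] by blast
  have e0: "{k. 0 < k \<and> k < j \<and> \<bar>u k\<bar> < u j} = {}" using e by force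
  have c: "card {k. 0 < k \<and> k < j \<and> \<bar>u k\<bar> < u j} = 0" unfolding e0 by simp
  note r = R1[OF sp K(3) j K(1) m]
  have "blen (u \<circ> refl1 j) = blen u + 1" using r unfolding c by simp
  then show ?thesis unfolding cover0_def using sp sp_comp[OF sp refl1_sp] inv_comp_cancel[OF sp] j by blast
qed

lemma cover_refl2_mk:
  assumes sp: "signed_perm u" and pq: "0 < p" "p < q" and pos: "u p + u q > 0" and mix: "u p < 0 \<or> u q < 0"
    and X: "\<forall>k. 0 < k \<and> k < p \<longrightarrow> \<not> (- u q < u k \<and> u k < u p) \<and> \<not> (- u p < u k \<and> u k < u q)"
    and Y: "\<forall>k. p < k \<and> k < q \<longrightarrow> \<not> (- u p < u k \<and> u k < u q)"
  shows "cover0 u (u \<circ> refl2 p q)"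
proof -
  obtain K where K: "K \<ge> q" "K \<ge> 0" "bnd K u" using sp_bnd_ge[OF sp] by blast
  have x: "(\<Sum>k\<in>{1..K}. of_bool (k < p \<and> - u q < u k \<and> u k < u p) + of_bool (k < p \<and> - u p < u k \<and> u k < u q) :: int) = 0"
    using X by (intro sum.neutral) auto
  have y: "(\<Sum>k\<in>{1..K}. of_bool (p < k \<and> k < q \<and> - u p < u k \<and> u k < u q) :: int) = 0"
    using Y by (intro sum.neutral) auto
  have "blen (u \<circ> refl2 p q) = blen u + 1" using R2mix[OF sp K(3) pq K(1) pos mix] x y by (simp del: sum_of_bool_eq)
  then show ?thesis unfolding cover0_def using sp sp_comp[OF sp refl2_sp[OF pq]] inv_comp_cancel[OF sp] pq by blast
qed

lemma card_window_perm:
  assumes sp: "signed_perm u" and b: "bnd K u"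
  shows "card {k \<in> {-K..K}. P (u k)} = card {v \<in> {-K..K}. P v}"
proof -
  have im: "u ` {-K..K} = {-K..K}"
  proof (intro set_eqI iffI)
    fix v assume "v \<in> u ` {-K..K}"
    then obtain a where a: "a \<in> {-K..K}" "v = u a" by blast
    then have "\<bar>a\<bar> \<le> K" by auto
    then have "\<bar>u a\<bar> \<le> K" by (rule bnd_window[OF sp b])
    then show "v \<in> {-K..K}" using a by auto
  next
    fix v assume v: "v \<in> {-K..K}"
    obtain a where a: "u a = v" using sp_surj[OF sp] by blast
    have "\<bar>a\<bar> \<le> K"
    proof (rule ccontr)
      assume "\<not> \<bar>a\<bar> \<le> K" then have "u a = a" using b unfolding bnd_def by auto
      then show False using a v \<open>\<not> \<bar>a\<bar> \<le> K\<close> by auto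
    qed
    then have "a \<in> {-K..K}" by auto
    then show "v \<in> u ` {-K..K}" using a by blast
  qed
  have "u ` {k \<in> {-K..K}. P (u k)} = {v \<in> {-K..K}. P v}"
  proof (intro set_eqI iffI)
    fix v assume "v \<in> u ` {k \<in> {-K..K}. P (u k)}" then show "v \<in> {v \<in> {-K..K}. P v}" using im by blast
  next
    fix v assume v: "v \<in> {v \<in> {-K..K}. P v}"
    then obtain a where "a \<in> {-K..K}" "v = u a" using im by (metis (no_types, lifting) imageE mem_Collect_eq)
    then show "v \<in> u ` {k \<in> {-K..K}. P (u k)}" using v by blast
  qed
  moreover have "inj_on u {k \<in> {-K..K}. P (u k)}" using sp_inj[OF sp] by (auto simp: inj_on_def dest: injD)
  ultimately show ?thesis by (metis card_image)
qed

definition mu :: "int \<Rightarrow> (int \<Rightarrow> int) \<Rightarrow> (int \<Rightarrow> int) \<Rightarrow> int" where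
  "mu K u w = (\<Sum>p\<in>{1..K}. u p - w p)"


lemma PP_neg: assumes sp: "signed_perm u" "signed_perm w" and P: "PP u w" and k: "k < 0" shows "u k \<le> w k"
proof -
  have "w (-k) \<le> u (-k)" using P k unfolding PP_def by auto
  then show ?thesis using sp_odd[OF sp(1)] sp_odd[OF sp(2)] by simp
qed

lemma PP_B: assumes "PP u w" "0 < a" "0 < b" "u a < u b" "a < b" shows "w a < w b"
  using assms unfolding PP_def by blast

lemma step_pos:
  assumes su: "signed_perm u" and sw: "signed_perm w" and P: "PP u w" and j: "0 < j" "w j < u j" "u j > 0"
    and F0: "\<forall>k>0. w k < u k \<longrightarrow> u j \<le> u k"
  shows "cover0 u (u \<circ> refl1 j) \<and> PP (u \<circ> refl1 j) w"
proof -
  define m where "m = u j"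
  have F1: "w k = u k" if "\<bar>u k\<bar> < m" for k
  proof -
    have pos: "w k = u k" if "k > 0" "\<bar>u k\<bar> < m" for k
    proof -
      have "w k \<le> u k" using P that unfolding PP_def by auto
      moreover have "\<not> w k < u k" using F0 that m_def by auto
      ultimately show ?thesis by simp
    qed
    show ?thesis
    proof (cases k "0::int" rule: linorder_cases)
      case less
      then have "w (-k) = u (-k)" using pos[of "-k"] that sp_odd[OF su] by simp
      then show ?thesis using sp_odd[OF su] sp_odd[OF sw] by simp
    next
      case equal then show ?thesis using sp_zero[OF su] sp_zero[OF sw] by simp
    next
      case greater then show ?thesis using pos that by simp
    qed
  qed
  have F2: "w j \<le> - m"
  proof (rule ccontr)
    assume "\<not> w j \<le> - m"
    then have "\<bar>w j\<bar> < m" using j m_def by auto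
    obtain k where k: "u k = w j" using sp_surj[OF su] by blast
    then have "w k = w j" using F1[of k] \<open>\<bar>w j\<bar> < m\<close> by simp
    then have "k = j" using sp_eq[OF sw] by simp
    then show False using k j by simp
  qed
  have E: "\<forall>k. 0 < k \<and> k < j \<longrightarrow> \<bar>u k\<bar> \<ge> u j"
  proof (intro allI impI)
    fix k assume k: "0 < k \<and> k < j"
    show "\<bar>u k\<bar> \<ge> u j"
    proof (rule ccontr)
      assume "\<not> \<bar>u k\<bar> \<ge> u j"
      then have a: "\<bar>u k\<bar> < m" using m_def by simp
      then have "u k < u j" using m_def by simp
      then have "w k < w j" using PP_B[OF P] k j by simp
      then show False using F1[OF a] F2 a by simp
    qed
  qed
  have cov: "cover0 u (u \<circ> refl1 j)" by (rule cover_refl1_mk[OF su j(1) j(3) E])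
  let ?v = "u \<circ> refl1 j"
  have vj: "?v j = - m" using refl1_vals(2)[of u j] sp_odd[OF su] m_def by simp
  have vk: "?v k = u k" if "k > 0" "k \<noteq> j" for k using refl1_vals(1)[of k j u] that j by simp
  have "PP ?v w" unfolding PP_def
  proof (intro conjI allI impI)
    fix p :: int assume p: "p > 0"
    show "w p \<le> ?v p"
    proof (cases "p = j")
      case True then show ?thesis using vj F2 by simp
    next
      case False then show ?thesis using vk[OF p False] P p unfolding PP_def by simp
    qed
  next
    fix a b :: int assume ab: "0 < a \<and> a < b \<and> ?v a < ?v b"
    show "w a < w b"
    proof (cases "b = j")
      case True
      then have "u a < - m" using ab vj vk[of a] by auto
      then have "u a < u j" using m_def j by simp
      then show ?thesis using PP_B[OF P] ab True j by simp
    next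
      case bj: False
      show ?thesis
      proof (cases "a = j")
        case True
        then have ub: "- m < u b" using ab vj vk[of b] bj by auto
        have "u b \<noteq> m" using sp_eq[OF su, of b j] bj m_def by simp
        have "u b \<noteq> - m" using sp_eq[OF su, of b "-j"] sp_odd[OF su, of j] ab j m_def by auto
        show ?thesis
        proof (cases "u b > m")
          case True
          then show ?thesis using PP_B[OF P, of j b] ab \<open>a = j\<close> m_def j by simp
        next
          case False
          then have "\<bar>u b\<bar> < m" using ub \<open>u b \<noteq> m\<close> by auto
          then show ?thesis using F1[of b] F2 ub \<open>a = j\<close> by simp
        qed
      next
        case False
        then show ?thesis using ab vk[of a] vk[of b] bj PP_B[OF P, of a b] by simp
      qed
    qed
  qed
  with cov show ?thesis by simp
qed


lemma refl2_vals_ij: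
  assumes su: "signed_perm u" and ij: "0 < i" "0 < j" "i \<noteq> j"
  shows "(u \<circ> refl2 (min i j) (max i j)) i = - u j" "(u \<circ> refl2 (min i j) (max i j)) j = - u i"
    "\<And>k. k > 0 \<Longrightarrow> k \<noteq> i \<Longrightarrow> k \<noteq> j \<Longrightarrow> (u \<circ> refl2 (min i j) (max i j)) k = u k"
  using ij sp_odd[OF su] by (auto simp: refl2_def min_def max_def)

lemma step_neg:
  assumes su: "signed_perm u" and sw: "signed_perm w" and P: "PP u w" and j: "0 < j" "w j < u j" "u j < 0"
    and F0: "\<forall>k>0. w k < u k \<longrightarrow> u j \<le> u k"
    and i: "0 < i" "w i < u i" "- u j < u i"
    and H1: "\<forall>k>0. w k < u k \<and> - u j < u k \<longrightarrow> u i \<le> u k"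
  shows "cover0 u (u \<circ> refl2 (min i j) (max i j)) \<and> PP (u \<circ> refl2 (min i j) (max i j)) w"
proof -
  define m where "m = u j"
  define M where "M = - u j"
  define \<alpha> where "\<alpha> = u i"
  have ij: "i \<noteq> j" using i j by auto
  have H2: "w k = u k" if "M < \<bar>u k\<bar>" "\<bar>u k\<bar> < \<alpha>" for k
  proof -
    have pos: "w k = u k" if "k > 0" "M < \<bar>u k\<bar>" "\<bar>u k\<bar> < \<alpha>" for k
    proof -
      have "w k \<le> u k" using P that unfolding PP_def by auto
      moreover have "\<not> w k < u k"
      proof
        assume wk: "w k < u k"
        show False
        proof (cases "u k > 0")
          case True then show False using H1 wk that M_def \<alpha>_def by auto
        next
          case False then show False using F0 wk that M_def by auto
        qed
      qed
      ultimately show ?thesis by simp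
    qed
    show ?thesis
    proof (cases k "0::int" rule: linorder_cases)
      case less
      then have "w (-k) = u (-k)" using pos[of "-k"] that sp_odd[OF su] by simp
      then show ?thesis using sp_odd[OF su] sp_odd[OF sw] by simp
    next
      case equal then show ?thesis using that sp_zero[OF su] M_def j by simp
    next
      case greater then show ?thesis using pos that by simp
    qed
  qed
  have H3: "w i \<le> M"
  proof (rule ccontr)
    assume "\<not> w i \<le> M"
    then have a: "M < \<bar>w i\<bar>" "\<bar>w i\<bar> < \<alpha>" using i j M_def \<alpha>_def by auto
    obtain k where k: "u k = w i" using sp_surj[OF su] by blast
    then have "w k = w i" using H2[of k] a by simp
    then have "k = i" using sp_eq[OF sw] by simp
    then show False using k i by simp
  qed
  have H4: "w j \<le> - \<alpha>"
  proof (rule ccontr)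
    assume "\<not> w j \<le> - \<alpha>"
    then have a: "M < \<bar>w j\<bar>" "\<bar>w j\<bar> < \<alpha>" using i j M_def \<alpha>_def by auto
    obtain k where k: "u k = w j" using sp_surj[OF su] by blast
    then have "w k = w j" using H2[of k] a by simp
    then have "k = j" using sp_eq[OF sw] by simp
    then show False using k j by simp
  qed
  have Z1: "\<forall>k. 0 < k \<and> k < i \<longrightarrow> \<not> (M < u k \<and> u k < \<alpha>)"
  proof (intro allI impI notI)
    fix k assume k: "0 < k \<and> k < i" and a: "M < u k \<and> u k < \<alpha>"
    then have "w k = u k" using H2[of k] M_def j by auto
    moreover have "w k < w i" using PP_B[OF P, of k i] k a i \<alpha>_def by simp
    ultimately show False using H3 a by simp
  qed
  have Z2: "\<forall>k. 0 < k \<and> k < j \<longrightarrow> \<not> (- \<alpha> < u k \<and> u k < m)"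
  proof (intro allI impI notI)
    fix k assume k: "0 < k \<and> k < j" and a: "- \<alpha> < u k \<and> u k < m"
    then have "w k = u k" using H2[of k] M_def m_def j by auto
    moreover have "w k < w j" using PP_B[OF P, of k j] k a j m_def by simp
    ultimately show False using H4 a by simp
  qed
  define p where "p = min i j"
  define q where "q = max i j"
  have pq: "0 < p" "p < q" using i j ij by (auto simp: p_def q_def)
  have upq: "u p + u q > 0" "u p < 0 \<or> u q < 0" using i j ij unfolding p_def q_def by (auto simp: min_def max_def)
  have X: "\<forall>k. 0 < k \<and> k < p \<longrightarrow> \<not> (- u q < u k \<and> u k < u p) \<and> \<not> (- u p < u k \<and> u k < u q)"
    using Z1 Z2 unfolding p_def q_def M_def m_def \<alpha>_def by (auto simp: min_def max_def)
  have Y: "\<forall>k. p < k \<and> k < q \<longrightarrow> \<not> (- u p < u k \<and> u k < u q)"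
    using Z1 Z2 i(1) j(1) unfolding p_def q_def M_def m_def \<alpha>_def by (auto simp: min_def max_def)
  have cov: "cover0 u (u \<circ> refl2 p q)" by (rule cover_refl2_mk[OF su pq upq X Y])
  let ?v = "u \<circ> refl2 p q"
  have vi: "?v i = M" and vj: "?v j = - \<alpha>" and vk: "\<And>k. k > 0 \<Longrightarrow> k \<noteq> i \<Longrightarrow> k \<noteq> j \<Longrightarrow> ?v k = u k"
    using refl2_vals_ij[OF su i(1) j(1) ij] unfolding p_def q_def M_def \<alpha>_def by auto
  have ne: "u b \<noteq> u a" if "b \<noteq> a" for a b using sp_eq[OF su] that by simp
  have "PP ?v w" unfolding PP_def
  proof (intro conjI allI impI)
    fix k :: int assume k: "k > 0"
    show "w k \<le> ?v k"
      using H3 H4 vi vj vk[OF k] P k unfolding PP_def by (cases "k = i"; cases "k = j") auto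
  next
    fix a b :: int assume ab: "0 < a \<and> a < b \<and> ?v a < ?v b"
    have \<alpha>M: "M < \<alpha>" using i M_def \<alpha>_def by simp
    have Mpos: "M > 0" using j M_def by simp
    show "w a < w b"
    proof (cases "a = i")
      case ai: True
      show ?thesis
      proof (cases "b = j")
        case True then show ?thesis using ab ai vi vj \<alpha>M Mpos by simp
      next
        case bj: False
        have ub: "M < u b" using ab ai vi vk[of b] bj by auto
        have "u b \<noteq> \<alpha>" using ne[of b i] ab ai \<alpha>_def by auto
        show ?thesis
        proof (cases "u b > \<alpha>")
          case True then show ?thesis using PP_B[OF P, of i b] ab ai \<alpha>_def i by simp
        next
          case False
          then have "w b = u b" using H2[of b] ub \<open>u b \<noteq> \<alpha>\<close> Mpos by auto
          then show ?thesis using ub H3 ai by simp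
        qed
      qed
    next
      case ai: False
      show ?thesis
      proof (cases "a = j")
        case aj: True
        show ?thesis
        proof (cases "b = i")
          case True then show ?thesis using PP_B[OF P, of j i] ab aj i j \<alpha>_def by simp
        next
          case bi: False
          have ub: "- \<alpha> < u b" using ab aj vj vk[of b] bi by auto
          have "u b \<noteq> m" using ne[of b j] ab aj m_def by auto
          show ?thesis
          proof (cases "u b > m")
            case True then show ?thesis using PP_B[OF P, of j b] ab aj m_def j by simp
          next
            case False
            then have "M < \<bar>u b\<bar>" "\<bar>u b\<bar> < \<alpha>" using ub \<open>u b \<noteq> m\<close> M_def m_def j(3) by auto
            then have "w b = u b" using H2[of b] by simp
            then show ?thesis using ub H4 aj by simp
          qed
        qed
      next
        case aj: False
        show ?thesis
        proof (cases "b = i")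
          case True
          then have "u a < \<alpha>" using ab vi vk[of a] ai aj \<alpha>M by auto
          then show ?thesis using PP_B[OF P, of a i] ab True \<alpha>_def by simp
        next
          case bi: False
          show ?thesis
          proof (cases "b = j")
            case True
            then have "u a < m" using ab vj vk[of a] ai aj \<alpha>M M_def m_def by auto
            then show ?thesis using PP_B[OF P, of a j] ab True m_def by simp
          next
            case False
            then show ?thesis using ab vk[of a] vk[of b] ai aj bi PP_B[OF P, of a b] by simp
          qed
        qed
      qed
    qed
  qed
  with cov show ?thesis unfolding p_def q_def by simp
qed


lemma step:
  assumes su: "signed_perm u" and sw: "signed_perm w" and P: "PP u w" and ne: "u \<noteq> w"
    and bu: "bnd K u" and bw: "bnd K w"
  shows "\<exists>u'. signed_perm u' \<and> cover0 u u' \<and> PP u' w \<and> bnd K u' \<and> mu K u' w < mu K u w"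
proof -
  define A where "A = {1..K}"
  define Dp where "Dp = {p \<in> A. w p < u p}"
  have fA: "finite A" unfolding A_def by simp
  have fD: "finite Dp" unfolding Dp_def using fA by simp
  have outK: "u k = w k" if "K < \<bar>k\<bar>" for k using bu bw that unfolding bnd_def by auto
  obtain a where a: "u a \<noteq> w a" using ne by auto
  have "\<bar>a\<bar> \<in> Dp"
  proof -
    have a0: "a \<noteq> 0" using a sp_zero[OF su] sp_zero[OF sw] by auto
    have "u \<bar>a\<bar> \<noteq> w \<bar>a\<bar>" using a sp_odd[OF su, of a] sp_odd[OF sw, of a] by (cases "a \<ge> 0") auto
    moreover have "w \<bar>a\<bar> \<le> u \<bar>a\<bar>" using P a0 unfolding PP_def by auto
    moreover have "\<bar>a\<bar> \<le> K" using outK[of a] a by force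
    ultimately show ?thesis using a0 unfolding Dp_def A_def by auto
  qed
  then have Dne: "Dp \<noteq> {}" by auto
  obtain j where jD: "j \<in> Dp" and jmin: "u j = Min (u ` Dp)"
    using Min_in[of "u ` Dp"] fD Dne by (metis (mono_tags, lifting) finite_imageI image_iff image_is_empty)
  have j: "0 < j" "j \<le> K" "w j < u j" using jD unfolding Dp_def A_def by auto
  have F0: "\<forall>k>0. w k < u k \<longrightarrow> u j \<le> u k"
  proof (intro allI impI)
    fix k :: int assume k: "k > 0" "w k < u k"
    then have "k \<le> K" using outK[of k] by force
    then have "k \<in> Dp" using k unfolding Dp_def A_def by auto
    then show "u j \<le> u k" unfolding jmin using fD by simp
  qed
  have uj0: "u j \<noteq> 0" using sp_nz[OF su] j by simp
  show ?thesis
  proof (cases "u j > 0")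
    case True
    note st = step_pos[OF su sw P j(1) j(3) True F0]
    let ?v = "u \<circ> refl1 j"
    have sv: "signed_perm ?v" by (rule sp_comp[OF su refl1_sp])
    have bv: "bnd K ?v" by (rule bnd_comp_refl1[OF bu j(1,2)])
    have vj: "?v j = - u j" using refl1_vals(2)[of u j] sp_odd[OF su] by simp
    have vk: "?v k = u k" if "k \<in> A - {j}" for k using refl1_vals(1)[of k j u] that j unfolding A_def by auto
    have jA: "j \<in> A" using j unfolding A_def by simp
    have "mu K ?v w = (?v j - w j) + (\<Sum>p\<in>A - {j}. ?v p - w p)"
      unfolding mu_def A_def[symmetric] by (rule sum.remove[OF fA jA])
    also have "(\<Sum>p\<in>A - {j}. ?v p - w p) = (\<Sum>p\<in>A - {j}. u p - w p)" using vk by (intro sum.cong) auto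
    finally have m1: "mu K ?v w = (?v j - w j) + (\<Sum>p\<in>A - {j}. u p - w p)" .
    have m2: "mu K u w = (u j - w j) + (\<Sum>p\<in>A - {j}. u p - w p)"
      unfolding mu_def A_def[symmetric] by (rule sum.remove[OF fA jA])
    have "mu K ?v w < mu K u w" using m1 m2 True vj by linarith
    then show ?thesis using st sv bv by blast
  next
    case False
    then have ujn: "u j < 0" using uj0 by simp
    define M where "M = - u j"
    define W where "W = {-K..K}"
    have cQ: "card {k \<in> W. M < u k} = card {k \<in> W. M < w k}"
      unfolding W_def using card_window_perm[OF su bu, of "\<lambda>v. M < v"] card_window_perm[OF sw bw, of "\<lambda>v. M < v"] by simp
    have mj: "-j \<in> {k \<in> W. M < w k} - {k \<in> W. M < u k}"
      using j sp_odd[OF su, of j] sp_odd[OF sw, of j] unfolding W_def M_def by auto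
    have fW: "finite {k \<in> W. M < w k}" by (rule finite_subset[of _ W]) (auto simp: W_def)
    have "\<exists>k \<in> W. M < u k \<and> \<not> M < w k"
    proof (rule ccontr)
      assume "\<not> ?thesis"
      then have "{k \<in> W. M < u k} \<subseteq> {k \<in> W. M < w k} - {-j}" using mj by auto
      then have "card {k \<in> W. M < u k} \<le> card ({k \<in> W. M < w k} - {-j})"
        using fW by (intro card_mono) auto
      also have "\<dots> < card {k \<in> W. M < w k}" using mj fW by (intro card_Diff1_less) auto
      finally show False using cQ by simp
    qed
    then obtain k0 where k0: "k0 \<in> W" "M < u k0" "w k0 \<le> M" by auto
    have k0pos: "k0 > 0"
    proof (rule ccontr)
      assume "\<not> k0 > 0"
      moreover have "k0 \<noteq> 0" using k0 sp_zero[OF su] M_def ujn by auto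
      ultimately have "u k0 \<le> w k0" using PP_neg[OF su sw P] by simp
      then show False using k0 by simp
    qed
    define D2 where "D2 = {p \<in> Dp. M < u p}"
    have k0D: "k0 \<in> D2" using k0 k0pos unfolding D2_def Dp_def A_def W_def by auto
    have fD2: "finite D2" using fD unfolding D2_def by simp
    obtain i where iD: "i \<in> D2" and imin: "u i = Min (u ` D2)"
      using Min_in[of "u ` D2"] fD2 k0D by (metis (mono_tags, lifting) empty_iff finite_imageI image_iff image_is_empty)
    have i: "0 < i" "i \<le> K" "w i < u i" "- u j < u i" using iD unfolding D2_def Dp_def A_def M_def by auto
    have H1: "\<forall>k>0. w k < u k \<and> - u j < u k \<longrightarrow> u i \<le> u k"
    proof (intro allI impI)
      fix k :: int assume k: "k > 0" "w k < u k \<and> - u j < u k"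
      then have "k \<le> K" using outK[of k] by force
      then have "k \<in> D2" using k unfolding D2_def Dp_def A_def M_def by auto
      then show "u i \<le> u k" unfolding imin using fD2 by simp
    qed
    have ij: "i \<noteq> j" using i ujn by auto
    note st = step_neg[OF su sw P j(1) j(3) ujn F0 i(1) i(3) i(4) H1]
    define p where "p = min i j"
    define q where "q = max i j"
    have pq: "0 < p" "p < q" "q \<le> K" using i j ij by (auto simp: p_def q_def)
    let ?v = "u \<circ> refl2 p q"
    have sv: "signed_perm ?v" by (rule sp_comp[OF su refl2_sp[OF pq(1,2)]])
    have bv: "bnd K ?v" by (rule bnd_comp_refl2[OF bu pq])
    have vi: "?v i = - u j" and vj: "?v j = - u i" and vk: "\<And>k. k > 0 \<Longrightarrow> k \<noteq> i \<Longrightarrow> k \<noteq> j \<Longrightarrow> ?v k = u k"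
      using refl2_vals_ij[OF su i(1) j(1) ij] unfolding p_def q_def by auto
    have iA: "i \<in> A" and jA: "j \<in> A" using i j unfolding A_def by auto
    have "mu K ?v w = (?v i - w i) + (?v j - w j) + (\<Sum>p\<in>A - {i, j}. ?v p - w p)"
      unfolding mu_def A_def[symmetric] by (rule sum_rm2[OF fA iA jA ij])
    also have "(\<Sum>p\<in>A - {i, j}. ?v p - w p) = (\<Sum>p\<in>A - {i, j}. u p - w p)"
      using vk by (intro sum.cong) (auto simp: A_def)
    finally have m1: "mu K ?v w = (?v i - w i) + (?v j - w j) + (\<Sum>p\<in>A - {i, j}. u p - w p)" .
    have m2: "mu K u w = (u i - w i) + (u j - w j) + (\<Sum>p\<in>A - {i, j}. u p - w p)"
      unfolding mu_def A_def[symmetric] by (rule sum_rm2[OF fA iA jA ij])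
    have "mu K ?v w < mu K u w" using m1 m2 i vi vj by linarith
    then show ?thesis using st sv bv unfolding p_def q_def by blast
  qed
qed

lemma mu_nonneg: "PP u w \<Longrightarrow> mu K u w \<ge> 0"
  unfolding mu_def PP_def by (intro sum_nonneg) auto

lemma complete:
  assumes su: "signed_perm u" and sw: "signed_perm w" and P: "PP u w"
  shows "cover0\<^sup>*\<^sup>* u w"
proof -
  obtain K1 where K1: "K1 \<ge> 0" "bnd K1 u" using sp_bnd[OF su] by blast
  obtain K2 where K2: "K2 \<ge> 0" "bnd K2 w" using sp_bnd[OF sw] by blast
  define K where "K = max K1 K2"
  have bu: "bnd K u" and bw: "bnd K w" using K1 K2 bnd_mono unfolding K_def by auto
  have "\<forall>u. signed_perm u \<and> bnd K u \<and> PP u w \<and> nat (mu K u w) = n \<longrightarrow> cover0\<^sup>*\<^sup>* u w" for n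
  proof (induction n rule: less_induct)
    case (less n)
    show ?case
    proof (intro allI impI)
      fix u assume u: "signed_perm u \<and> bnd K u \<and> PP u w \<and> nat (mu K u w) = n"
      show "cover0\<^sup>*\<^sup>* u w"
      proof (cases "u = w")
        case True then show ?thesis by simp
      next
        case False
        then obtain u' where u': "signed_perm u'" "cover0 u u'" "PP u' w" "bnd K u'" "mu K u' w < mu K u w"
          using step[OF _ sw _ False _ bw] u by blast
        have "nat (mu K u' w) < n" using u'(5) mu_nonneg[OF u'(3), of K] u by linarith
        then have "cover0\<^sup>*\<^sup>* u' w" using less u' by blast
        then show ?thesis by (rule converse_rtranclp_into_rtranclp[of cover0, OF u'(2)])
      qed
    qed
  qed
  then show ?thesis using su bu P by blast
qed

lemma bruhat0_iff: "bruhat0 u w \<longleftrightarrow> signed_perm u \<and> signed_perm w \<and> PP u w"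
  using bruhat0_PP complete unfolding bruhat0_def by blast


definition ysort :: "int set \<Rightarrow> int \<Rightarrow> int" where
  "ysort S z = (if z \<in> S then int (card {s \<in> S. s \<le> z})
                else if z = 0 then 0 else - int (card {s \<in> S. s \<le> - z}))"

locale sortset =
  fixes S :: "int set" and L :: int
  assumes s1: "\<And>z. z \<noteq> 0 \<Longrightarrow> z \<in> S \<longleftrightarrow> - z \<notin> S"
    and s2: "0 \<notin> S"
    and s3: "\<And>z. z \<in> S \<Longrightarrow> z < 0 \<Longrightarrow> - L \<le> z"
    and L0: "L \<ge> 0"
begin

lemma fin_le: "finite {s \<in> S. s \<le> z}"
proof (rule finite_subset[of _ "{-L..\<bar>z\<bar>}"])
  show "{s \<in> S. s \<le> z} \<subseteq> {-L..\<bar>z\<bar>}"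
  proof
    fix s assume s: "s \<in> {s \<in> S. s \<le> z}"
    then have "- L \<le> s" using s3[of s] L0 by (cases "s < 0") auto
    then show "s \<in> {-L..\<bar>z\<bar>}" using s by auto
  qed
qed simp

lemma card_big: assumes "z > L" shows "card {s \<in> S. s \<le> z} = nat z"
proof -
  have "bij_betw abs {s \<in> S. s \<le> z} {1..z}"
  proof (rule bij_betwI')
    fix x y assume "x \<in> {s \<in> S. s \<le> z}" "y \<in> {s \<in> S. s \<le> z}"
    then have "x \<in> S" "y \<in> S" by auto
    show "(\<bar>x\<bar> = \<bar>y\<bar>) = (x = y)"
    proof
      assume "\<bar>x\<bar> = \<bar>y\<bar>"
      then have "x = y \<or> x = - y" by (auto simp: abs_eq_iff)
      moreover have "x \<noteq> - y" using s1[of y] s2 \<open>x \<in> S\<close> \<open>y \<in> S\<close> by auto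
      ultimately show "x = y" by simp
    qed simp
  next
    fix x assume x: "x \<in> {s \<in> S. s \<le> z}"
    then have "x \<noteq> 0" using s2 by auto
    moreover have "x < 0 \<Longrightarrow> - L \<le> x" using s3 x by auto
    ultimately show "\<bar>x\<bar> \<in> {1..z}" using x assms by (cases "x < 0") auto
  next
    fix y assume y: "y \<in> {1..z}"
    show "\<exists>x\<in>{s \<in> S. s \<le> z}. y = \<bar>x\<bar>"
    proof (cases "y \<in> S")
      case True then show ?thesis using y by (intro bexI[of _ y]) auto
    next
      case False
      then have "- y \<in> S" using s1[of y] y by auto
      then show ?thesis using y by (intro bexI[of _ "-y"]) auto
    qed
  qed
  then have "card {s \<in> S. s \<le> z} = card {1..z}" by (rule bij_betw_same_card)
  then show ?thesis by simp
qed

lemma y_pos: "z \<in> S \<Longrightarrow> ysort S z > 0"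
proof -
  assume z: "z \<in> S"
  then have "z \<in> {s \<in> S. s \<le> z}" by auto
  then have "card {s \<in> S. s \<le> z} > 0" using fin_le[of z] card_gt_0_iff by blast
  then show ?thesis using z unfolding ysort_def by simp
qed

lemma y_mono: assumes "a \<in> S" "b \<in> S" "a < b" shows "ysort S a < ysort S b"
proof -
  have "{s \<in> S. s \<le> a} \<subseteq> {s \<in> S. s \<le> b}" "b \<in> {s \<in> S. s \<le> b}" "b \<notin> {s \<in> S. s \<le> a}"
    using assms by auto
  then have "{s \<in> S. s \<le> a} \<subset> {s \<in> S. s \<le> b}" by blast
  then have "card {s \<in> S. s \<le> a} < card {s \<in> S. s \<le> b}" using fin_le by (intro psubset_card_mono) auto
  then show ?thesis using assms unfolding ysort_def by simp
qed

lemma y_odd: "ysort S (- z) = - ysort S z"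
proof (cases "z = 0")
  case True then show ?thesis using s2 by (simp add: ysort_def)
next
  case False
  show ?thesis
  proof (cases "z \<in> S")
    case True
    then have "- z \<notin> S" using s1[of z] False by auto
    then show ?thesis using True False unfolding ysort_def by simp
  next
    case nz: False
    then have "- z \<in> S" using s1[of z] False by auto
    then show ?thesis using nz False unfolding ysort_def by simp
  qed
qed

lemma y_notS: "z \<notin> S \<Longrightarrow> ysort S z \<le> 0"
  unfolding ysort_def by auto

lemma y_big: assumes "\<bar>z\<bar> > L" shows "ysort S z = z"
proof (cases "z > 0")
  case True
  then have "- z \<notin> S" using s3[of "-z"] assms by auto
  then have "z \<in> S" using s1[of z] True by auto
  then show ?thesis using card_big[of z] assms True unfolding ysort_def by simp
next
  case False
  then have "- z > L" "- z > 0" using assms L0 by auto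
  then have "- z \<notin> S \<Longrightarrow> False" using s3[of "z"] s1[of z] by auto
  then have "- z \<in> S" by blast
  then have "ysort S (- z) = - z" using card_big[of "-z"] \<open>- z > L\<close> False unfolding ysort_def by simp
  then show ?thesis using y_odd[of z] by simp
qed

lemma y_inj: "inj (ysort S)"
proof (rule injI)
  fix a b assume e: "ysort S a = ysort S b"
  have c: "a = b" if "a \<in> S" "b \<in> S" "ysort S a = ysort S b" for a b
    using y_mono[of a b] y_mono[of b a] that by (cases a b rule: linorder_cases) auto
  have nS: "z \<notin> S \<Longrightarrow> z \<noteq> 0 \<Longrightarrow> - z \<in> S" for z using s1[of z] by auto
  show "a = b"
  proof (cases "a \<in> S")
    case aS: True
    show ?thesis
    proof (cases "b \<in> S")
      case True then show ?thesis using c aS e by simp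
    next
      case False then show ?thesis using y_pos[OF aS] y_notS[of b] e by simp
    qed
  next
    case aS: False
    show ?thesis
    proof (cases "b \<in> S")
      case True then show ?thesis using y_pos[OF True] y_notS[of a] aS e by simp
    next
      case bS: False
      show ?thesis
      proof (cases "a = 0 \<or> b = 0")
        case True
        have z: "ysort S 0 = 0" unfolding ysort_def using s2 by simp
        have nz: "ysort S z \<noteq> 0" if "z \<noteq> 0" for z
        proof (cases "z \<in> S")
          case True then show ?thesis using y_pos by force
        next
          case False then have "- z \<in> S" using nS that by simp
          then show ?thesis using y_pos[of "-z"] y_odd[of z] by simp
        qed
        show ?thesis using True e z nz by metis
      next
        case False
        then have "- a \<in> S" "- b \<in> S" using nS aS bS by auto
        moreover have "ysort S (- a) = ysort S (- b)" using e y_odd by simp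
        ultimately show ?thesis using c by fastforce
      qed
    qed
  qed
qed

lemma y_sp: "signed_perm (ysort S)"
proof -
  define W where "W = {-(L+1)..L+1}"
  have inW: "ysort S z \<in> W" if "z \<in> W" for z
  proof (cases "z \<in> S")
    case True
    have "z \<le> L + 1" using that W_def by simp
    then have "{s \<in> S. s \<le> z} \<subseteq> {s \<in> S. s \<le> L + 1}" by auto
    then have "card {s \<in> S. s \<le> z} \<le> card {s \<in> S. s \<le> L + 1}" using fin_le by (intro card_mono) auto
    also have "\<dots> = nat (L + 1)" using card_big[of "L+1"] by simp
    finally show ?thesis using True y_pos[OF True] unfolding W_def ysort_def by auto
  next
    case False
    show ?thesis
    proof (cases "z = 0")
      case True then show ?thesis unfolding W_def ysort_def using False L0 by simp
    next
      case nz: False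
      then have m: "- z \<in> S" using s1[of z] nz False by auto
      have "- z \<le> L + 1" using that W_def by simp
      then have "{s \<in> S. s \<le> - z} \<subseteq> {s \<in> S. s \<le> L + 1}" by auto
      then have "card {s \<in> S. s \<le> - z} \<le> card {s \<in> S. s \<le> L + 1}" using fin_le by (intro card_mono) auto
      also have "\<dots> = nat (L + 1)" using card_big[of "L+1"] by simp
      finally show ?thesis using False nz y_pos[OF m] y_odd[of z] unfolding W_def ysort_def by auto
    qed
  qed
  have sub: "ysort S ` W \<subseteq> W" using inW by blast
  have fW: "finite W" unfolding W_def by simp
  have "ysort S ` W = W"
    by (rule endo_inj_surj[OF fW sub inj_on_subset[OF y_inj]]) simp
  have surj: "surj (ysort S)"
  proof -
    have "z \<in> range (ysort S)" for z
    proof (cases "z \<in> W")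
      case True then show ?thesis using \<open>ysort S ` W = W\<close> by blast
    next
      case False then have "\<bar>z\<bar> > L" unfolding W_def by auto
      then show ?thesis using y_big[of z] by (metis rangeI)
    qed
    then show ?thesis by blast
  qed
  have "finite {z. ysort S z \<noteq> z}"
  proof (rule finite_subset[of _ "{-L..L}"])
    show "{z. ysort S z \<noteq> z} \<subseteq> {-L..L}" using y_big by force
  qed simp
  then show ?thesis unfolding signed_perm_def using y_inj surj y_odd by (simp add: bij_def)
qed

end


lemma construct:
  assumes se: "signed_perm \<eta>" and sz: "signed_perm \<zeta>"
    and c1: "\<forall>a. a \<noteq> 0 \<and> a > \<eta> a \<longrightarrow> \<eta> a \<ge> \<zeta> a"
    and c2: "\<forall>a b. a \<noteq> 0 \<and> b \<noteq> 0 \<and> a < b \<and> a > \<zeta> a \<and> b > \<zeta> b \<and> \<zeta> a < \<zeta> b \<longrightarrow> \<eta> a < \<eta> b"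
  shows "\<exists>u. signed_perm u \<and> PP u (\<eta> \<circ> u) \<and> PP (\<eta> \<circ> u) (\<zeta> \<circ> u)"
proof -
  define V where "V = {v. \<zeta> v < v \<or> (\<zeta> v = v \<and> v > 0)}"
  define S where "S = \<zeta> ` V"
  obtain Kz where Kz: "Kz \<ge> 0" "bnd Kz \<zeta>" using sp_bnd[OF sz] by blast
  have Vneg: "v \<in> V \<longleftrightarrow> - v \<notin> V" if "v \<noteq> 0" for v
    using that sp_odd[OF sz, of v] unfolding V_def by auto
  have SV: "\<zeta> v \<in> S \<longleftrightarrow> v \<in> V" for v unfolding S_def using sp_eq[OF sz] by auto
  interpret sortset S Kz
  proof
    fix z :: int assume z: "z \<noteq> 0"
    obtain v where v: "\<zeta> v = z" using sp_surj[OF sz] by blast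
    have v0: "v \<noteq> 0" using v z sp_zero[OF sz] by auto
    have "- z = \<zeta> (- v)" using v sp_odd[OF sz] by simp
    then show "z \<in> S \<longleftrightarrow> - z \<notin> S" using SV[of v] SV[of "-v"] Vneg[OF v0] v by simp
  next
    show "0 \<notin> S" using SV[of 0] sp_zero[OF sz] unfolding V_def by auto
  next
    fix z :: int assume z: "z \<in> S" "z < 0"
    then obtain v where v: "v \<in> V" "\<zeta> v = z" unfolding S_def by auto
    have "\<bar>v\<bar> \<le> Kz"
    proof (rule ccontr)
      assume "\<not> \<bar>v\<bar> \<le> Kz"
      then have "\<zeta> v = v" using Kz unfolding bnd_def by auto
      then show False using v z unfolding V_def by auto
    qed
    then have "\<bar>\<zeta> v\<bar> \<le> Kz" by (rule bnd_window[OF sz Kz(2)])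
    then show "- Kz \<le> z" using v by auto
  next
    show "Kz \<ge> 0" by (rule Kz(1))
  qed
  define y where "y = ysort S"
  have sy: "signed_perm y" unfolding y_def by (rule y_sp)
  define u where "u = inv (y \<circ> \<zeta>)"
  have sx: "signed_perm (y \<circ> \<zeta>)" by (rule sp_comp[OF sy sz])
  have su: "signed_perm u" unfolding u_def by (rule sp_inv[OF sx])
  have xu: "y (\<zeta> (u p)) = p" for p using sp_inv_r[OF sx, of p] unfolding u_def by simp
  have uV: "u p \<in> V" if "p > 0" for p
  proof -
    have "y (\<zeta> (u p)) > 0" using xu that by simp
    then have "\<zeta> (u p) \<in> S" using y_notS[of "\<zeta> (u p)"] unfolding y_def by force
    then show ?thesis using SV by simp
  qed
  have ord: "\<zeta> (u p) < \<zeta> (u q)" if "0 < p" "p < q" for p q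
  proof -
    have a: "\<zeta> (u p) \<in> S" "\<zeta> (u q) \<in> S" using uV that SV by auto
    show ?thesis
    proof (rule ccontr)
      assume "\<not> ?thesis"
      then have "\<zeta> (u q) < \<zeta> (u p) \<or> \<zeta> (u q) = \<zeta> (u p)" by auto
      then show False
      proof
        assume "\<zeta> (u q) < \<zeta> (u p)"
        then have "y (\<zeta> (u q)) < y (\<zeta> (u p))" using y_mono a unfolding y_def by blast
        then show False using xu that by simp
      next
        assume "\<zeta> (u q) = \<zeta> (u p)"
        then have "y (\<zeta> (u q)) = y (\<zeta> (u p))" by simp
        then show False using xu that by simp
      qed
    qed
  qed
  have Vp1: "\<eta> v \<le> v \<and> \<zeta> v \<le> \<eta> v" if "v \<in> V" for v
  proof -
    have up: "\<not> \<eta> v > v" if "\<zeta> v = v" "v \<noteq> 0" for v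
    proof
      assume h: "\<eta> v > v"
      have "- v \<noteq> 0" "- v > \<eta> (- v)" using h that sp_odd[OF se, of v] by auto
      then have "\<eta> (- v) \<ge> \<zeta> (- v)" using c1 by blast
      then have "\<zeta> v \<ge> \<eta> v" using sp_odd[OF se, of v] sp_odd[OF sz, of v] by simp
      then show False using h that by simp
    qed
    show ?thesis
    proof (cases "\<zeta> v < v")
      case True
      have v0: "v \<noteq> 0" using True sp_zero[OF sz] by auto
      have n: "\<not> \<eta> v > v"
      proof
        assume h: "\<eta> v > v"
        have "- v \<noteq> 0" "- v > \<eta> (- v)" using h v0 sp_odd[OF se, of v] by auto
        then have "\<eta> (- v) \<ge> \<zeta> (- v)" using c1 by blast
        then have "\<zeta> v \<ge> \<eta> v" using sp_odd[OF se, of v] sp_odd[OF sz, of v] by simp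
        then show False using h True by simp
      qed
      moreover have "\<zeta> v \<le> \<eta> v"
      proof (cases "\<eta> v < v")
        case True then show ?thesis using c1[rule_format, of v] v0 by simp
      next
        case False then show ?thesis using n \<open>\<zeta> v < v\<close> by simp
      qed
      ultimately show ?thesis by simp
    next
      case False
      then have f: "\<zeta> v = v" "v > 0" using that unfolding V_def by auto
      have "\<not> \<eta> v > v" using up[of v] f by simp
      moreover have "\<not> \<eta> v < v"
      proof
        assume h: "\<eta> v < v"
        have "\<eta> v \<ge> \<zeta> v" using c1[rule_format, of v] h f by simp
        then show False using h f by simp
      qed
      ultimately show ?thesis using f by simp
    qed
  qed
  have Vfix: "\<eta> v = v" if "v \<in> V" "\<zeta> v = v" for v using Vp1[OF that(1)] that(2) by simp
  have P1: "PP u (\<eta> \<circ> u)" unfolding PP_def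
  proof (intro conjI allI impI)
    fix p :: int assume "p > 0" then show "(\<eta> \<circ> u) p \<le> u p" using Vp1 uV by simp
  next
    fix p q :: int assume pq: "0 < p \<and> p < q \<and> u p < u q"
    define v where "v = u p"
    define v' where "v' = u q"
    have vV: "v \<in> V" "v' \<in> V" using uV pq unfolding v_def v'_def by auto
    have zz: "\<zeta> v < \<zeta> v'" using ord pq unfolding v_def v'_def by auto
    have vv: "v < v'" using pq unfolding v_def v'_def by simp
    have v0: "v \<noteq> 0" "v' \<noteq> 0" using vV sp_zero[OF sz] unfolding V_def by auto
    have "\<eta> v < \<eta> v'"
    proof (cases "\<zeta> v < v")
      case d1: True
      show ?thesis
      proof (cases "\<zeta> v' < v'")
        case True then show ?thesis using c2[rule_format, of v v'] v0 vv d1 zz by simp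
      next
        case False
        then have "\<zeta> v' = v'" using vV unfolding V_def by auto
        then have "\<eta> v' = v'" using Vfix vV by simp
        then show ?thesis using Vp1[OF vV(1)] vv by simp
      qed
    next
      case False
      then have fv: "\<zeta> v = v" using vV unfolding V_def by auto
      then have ev: "\<eta> v = v" using Vfix vV by simp
      show ?thesis
      proof (rule ccontr)
        assume "\<not> ?thesis"
        moreover have "\<eta> v' \<noteq> \<eta> v" using sp_eq[OF se] vv by simp
        ultimately have "\<eta> v' < v" using ev by simp
        then have "\<zeta> v' < v" using Vp1[OF vV(2)] by simp
        then show False using zz fv by simp
      qed
    qed
    then show "(\<eta> \<circ> u) p < (\<eta> \<circ> u) q" unfolding v_def v'_def by simp
  qed
  have P2: "PP (\<eta> \<circ> u) (\<zeta> \<circ> u)" unfolding PP_def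
  proof (intro conjI allI impI)
    fix p :: int assume "p > 0" then show "(\<zeta> \<circ> u) p \<le> (\<eta> \<circ> u) p" using Vp1 uV by simp
  next
    fix p q :: int assume pq: "0 < p \<and> p < q \<and> (\<eta> \<circ> u) p < (\<eta> \<circ> u) q"
    then show "(\<zeta> \<circ> u) p < (\<zeta> \<circ> u) q" using ord by simp
  qed
  show ?thesis using su P1 P2 by blast
qed


lemma lag_le_iff:
  assumes se: "signed_perm \<eta>" and sz: "signed_perm \<zeta>"
  shows "lag_le \<eta> \<zeta> \<longleftrightarrow>
           (\<forall>a. a \<noteq> 0 \<and> a > \<eta> a \<longrightarrow> \<eta> a \<ge> \<zeta> a) \<and>
           (\<forall>a b. a \<noteq> 0 \<and> b \<noteq> 0 \<and> a < b \<and> a > \<zeta> a \<and> b > \<zeta> b \<and> \<zeta> a < \<zeta> b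
                 \<longrightarrow> \<eta> a < \<eta> b)"
proof
  assume "lag_le \<eta> \<zeta>"
  then obtain u where su: "signed_perm u" and b1: "bruhat0 u (\<eta> \<circ> u)" and b2: "bruhat0 (\<eta> \<circ> u) (\<zeta> \<circ> u)"
    unfolding lag_le_def by blast
  have P1: "PP u (\<eta> \<circ> u)" and P2: "PP (\<eta> \<circ> u) (\<zeta> \<circ> u)" using b1 b2 bruhat0_PP by auto
  have P3: "PP u (\<zeta> \<circ> u)" by (rule PP_trans[OF P1 P2])
  have seu: "signed_perm (\<eta> \<circ> u)" and szu: "signed_perm (\<zeta> \<circ> u)" using sp_comp su se sz by auto
  have pos: "inv u a > 0" if "a \<noteq> 0" "a > f a" "PP u (f \<circ> u)" "signed_perm (f \<circ> u)" for a f
  proof -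
    have ua: "u (inv u a) = a" by (rule sp_inv_r[OF su])
    have "inv u a \<noteq> 0" using ua that sp_zero[OF su] by auto
    moreover have "\<not> inv u a < 0"
    proof
      assume "inv u a < 0"
      then have "u (inv u a) \<le> (f \<circ> u) (inv u a)" using PP_neg[OF su that(4) that(3)] by simp
      then show False using ua that by simp
    qed
    ultimately show ?thesis by simp
  qed
  have ua: "u (inv u a) = a" for a by (rule sp_inv_r[OF su])
  show "(\<forall>a. a \<noteq> 0 \<and> a > \<eta> a \<longrightarrow> \<eta> a \<ge> \<zeta> a) \<and>
           (\<forall>a b. a \<noteq> 0 \<and> b \<noteq> 0 \<and> a < b \<and> a > \<zeta> a \<and> b > \<zeta> b \<and> \<zeta> a < \<zeta> b
                 \<longrightarrow> \<eta> a < \<eta> b)"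
  proof (intro conjI allI impI)
    fix a assume a: "a \<noteq> 0 \<and> a > \<eta> a"
    have "inv u a > 0" using pos[of a \<eta>] a P1 seu by simp
    then have "(\<zeta> \<circ> u) (inv u a) \<le> (\<eta> \<circ> u) (inv u a)" using P2 unfolding PP_def by blast
    then show "\<eta> a \<ge> \<zeta> a" using ua[of a] by simp
  next
    fix a b assume ab: "a \<noteq> 0 \<and> b \<noteq> 0 \<and> a < b \<and> a > \<zeta> a \<and> b > \<zeta> b \<and> \<zeta> a < \<zeta> b"
    define p where "p = inv u a"
    define q where "q = inv u b"
    have p: "p > 0" using pos[of a \<zeta>] ab P3 szu unfolding p_def by simp
    have q: "q > 0" using pos[of b \<zeta>] ab P3 szu unfolding q_def by simp
    have up: "u p = a" "u q = b" unfolding p_def q_def by (rule ua)+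
    have "p \<noteq> q" using up ab by auto
    then consider "p < q" | "q < p" by linarith
    then show "\<eta> a < \<eta> b"
    proof cases
      case 1
      then have "(\<eta> \<circ> u) p < (\<eta> \<circ> u) q" using PP_B[OF P1 p q] up ab by simp
      then show ?thesis using up by simp
    next
      case 2
      show ?thesis
      proof (rule ccontr)
        assume "\<not> ?thesis"
        moreover have "\<eta> a \<noteq> \<eta> b" using sp_eq[OF se] ab by simp
        ultimately have "(\<eta> \<circ> u) q < (\<eta> \<circ> u) p" using up by simp
        then have "(\<zeta> \<circ> u) q < (\<zeta> \<circ> u) p" using PP_B[OF P2 q p _ 2] by simp
        then show False using up ab by simp
      qed
    qed
  qed
next
  assume h: "(\<forall>a. a \<noteq> 0 \<and> a > \<eta> a \<longrightarrow> \<eta> a \<ge> \<zeta> a) \<and>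
           (\<forall>a b. a \<noteq> 0 \<and> b \<noteq> 0 \<and> a < b \<and> a > \<zeta> a \<and> b > \<zeta> b \<and> \<zeta> a < \<zeta> b
                 \<longrightarrow> \<eta> a < \<eta> b)"
  obtain u where u: "signed_perm u" "PP u (\<eta> \<circ> u)" "PP (\<eta> \<circ> u) (\<zeta> \<circ> u)"
    using construct[OF se sz] h by blast
  have "signed_perm (\<eta> \<circ> u)" "signed_perm (\<zeta> \<circ> u)" using sp_comp u(1) se sz by auto
  then show "lag_le \<eta> \<zeta>" unfolding lag_le_def bruhat0_iff using u by blast
qed


lemma flow:
  assumes sz: "signed_perm z" and b: "bnd K z" and f: "z f = f"
  shows "card {x \<in> {-K..K}. z x < f \<and> f < x} = card {x \<in> {-K..K}. x < f \<and> f < z x}"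
proof -
  define W where "W = {-K..K}"
  define T where "T = {x \<in> W. f < x}"
  have fW: "finite W" unfolding W_def by simp
  have X1: "{x \<in> W. z x < f \<and> f < x} = {x \<in> T. \<not> f < z x}"
  proof -
    have "z x \<noteq> f" if "f < x" for x using sp_eq[OF sz, of x f] f that by auto
    then show ?thesis unfolding T_def by force
  qed
  have X2: "{x \<in> W. x < f \<and> f < z x} = {x \<in> W - T. f < z x}"
  proof (intro set_eqI iffI)
    fix x assume "x \<in> {x \<in> W. x < f \<and> f < z x}" then show "x \<in> {x \<in> W - T. f < z x}" unfolding T_def by auto
  next
    fix x assume x: "x \<in> {x \<in> W - T. f < z x}"
    then have "x \<le> f" unfolding T_def by auto
    moreover have "x \<noteq> f" using x f by auto
    ultimately show "x \<in> {x \<in> W. x < f \<and> f < z x}" using x by auto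
  qed
  have c0: "card {x \<in> W. f < z x} = card T"
    unfolding T_def W_def by (rule card_window_perm[OF sz b])
  have c1: "card {x \<in> W. f < z x} = card {x \<in> T. f < z x} + card {x \<in> W - T. f < z x}"
  proof -
    have "{x \<in> W. f < z x} = {x \<in> T. f < z x} \<union> {x \<in> W - T. f < z x}" unfolding T_def by auto
    moreover have "finite {x \<in> T. f < z x}" "finite {x \<in> W - T. f < z x}" using fW unfolding T_def by auto
    ultimately show ?thesis by (simp add: card_Un_disjoint disjoint_iff)
  qed
  have c2: "card T = card {x \<in> T. f < z x} + card {x \<in> T. \<not> f < z x}"
  proof -
    have "T = {x \<in> T. f < z x} \<union> {x \<in> T. \<not> f < z x}" by auto
    moreover have "finite {x \<in> T. f < z x}" "finite {x \<in> T. \<not> f < z x}" using fW unfolding T_def by auto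
    ultimately show ?thesis by (metis (no_types, lifting) card_Un_disjoint disjoint_iff mem_Collect_eq)
  qed
  show ?thesis unfolding W_def[symmetric] X1 X2 using c0 c1 c2 by simp
qed

lemma flow_neg:
  assumes sz: "signed_perm z" and b: "bnd K z" and f: "z f = f"
  shows "card {x \<in> {-K..K}. z x < f \<and> f < x} = card {x \<in> {-K..K}. z x < - f \<and> - f < x}"
proof -
  have "{x \<in> {-K..K}. z x < - f \<and> - f < x} = uminus ` {x \<in> {-K..K}. x < f \<and> f < z x}"
  proof (intro set_eqI iffI)
    fix x assume "x \<in> {x \<in> {-K..K}. z x < - f \<and> - f < x}"
    then show "x \<in> uminus ` {x \<in> {-K..K}. x < f \<and> f < z x}"
      using sp_odd[OF sz, of x] by (intro image_eqI[of _ _ "-x"]) auto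
  next
    fix x assume "x \<in> uminus ` {x \<in> {-K..K}. x < f \<and> f < z x}"
    then show "x \<in> {x \<in> {-K..K}. z x < - f \<and> - f < x}" using sp_odd[OF sz] by auto
  qed
  then have "card {x \<in> {-K..K}. z x < - f \<and> - f < x} = card {x \<in> {-K..K}. x < f \<and> f < z x}"
    by (simp add: card_image inj_on_def)
  then show ?thesis using flow[OF assms] by simp
qed


locale fsetup =
  fixes z u :: "int \<Rightarrow> int" and K :: int
  assumes sz: "signed_perm z" and su: "signed_perm u" and P: "PP u (z \<circ> u)" and K0: "K \<ge> 0"
    and bu: "bnd K u" and bz: "bnd K z"
begin

abbreviation "w \<equiv> z \<circ> u"

lemma sw: "signed_perm w" by (rule sp_comp[OF sz su])
lemma bw: "bnd K w" using bu bz unfolding bnd_def by auto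

lemma neg_pos: "p < 0 \<Longrightarrow> u p \<le> z (u p)"
  using PP_neg[OF su sw P] by simp

lemma pos_le: "p > 0 \<Longrightarrow> z (u p) \<le> u p"
  using P unfolding PP_def by simp

lemma fixout: "K < \<bar>v\<bar> \<Longrightarrow> z v = v" using bz unfolding bnd_def by auto

lemma L_neg:
  "negs K w - negs K u =
     (\<Sum>a\<in>{a. a \<noteq> 0 \<and> a > z a \<and> 0 > z a}. \<bar>z a\<bar>) - (\<Sum>a\<in>{a. 0 > a \<and> a > z a}. \<bar>a\<bar>)"
proof -
  define A where "A = {1..K}"
  define W0 where "W0 = {-K..K} - {0}"
  define ng where "ng x = (if x < 0 then - x else (0::int))" for x
  define g where "g v = (if z v < v \<and> z v < 0 then \<bar>z v\<bar> else 0) - (if z v < v \<and> v < 0 then \<bar>v\<bar> else (0::int))" for v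
  have gng: "g v = (if z v < v then ng (z v) - ng v else 0)" for v unfolding g_def ng_def by auto
  have a: "negs K w - negs K u = (\<Sum>p\<in>A. g (u p))"
  proof -
    have "negs K w - negs K u = (\<Sum>p\<in>A. ng (w p) - ng (u p))"
      unfolding negs_def A_def ng_def by (simp add: sum_subtractf)
    also have "\<dots> = (\<Sum>p\<in>A. g (u p))"
    proof (intro sum.cong refl)
      fix p assume "p \<in> A"
      then have "z (u p) \<le> u p" using pos_le unfolding A_def by simp
      then show "ng (w p) - ng (u p) = g (u p)" unfolding gng by auto
    qed
    finally show ?thesis .
  qed
  have b: "(\<Sum>p\<in>A. g (u p)) = (\<Sum>p\<in>W0. g (u p))"
  proof -
    have e: "W0 = A \<union> {-K..-1}" unfolding W0_def A_def by auto
    have "(\<Sum>p\<in>W0. g (u p)) = (\<Sum>p\<in>A. g (u p)) + (\<Sum>p\<in>{-K..-1}. g (u p))"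
      unfolding e by (rule sum.union_disjoint) (auto simp: A_def)
    moreover have "(\<Sum>p\<in>{-K..-1}. g (u p)) = 0"
    proof (intro sum.neutral ballI)
      fix p assume "p \<in> {-K..-1}"
      then have "u p \<le> z (u p)" using neg_pos by simp
      then show "g (u p) = 0" unfolding gng by simp
    qed
    ultimately show ?thesis by simp
  qed
  have c: "(\<Sum>p\<in>W0. g (u p)) = (\<Sum>v\<in>W0. g v)"
  proof -
    have "inj_on u W0" using sp_inj[OF su] by (auto simp: inj_on_def dest: injD)
    then have "(\<Sum>v\<in>u ` W0. g v) = (\<Sum>p\<in>W0. g (u p))" by (simp add: sum.reindex)
    then show ?thesis using sp_window_image[OF su bu] unfolding W0_def by simp
  qed
  have inW: "a \<in> W0" if "z a \<noteq> a" "a \<noteq> 0" for a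
    using fixout[of a] that unfolding W0_def by force
  have d1: "(\<Sum>v\<in>W0. (if z v < v \<and> z v < 0 then \<bar>z v\<bar> else 0)) = (\<Sum>a\<in>{a. a \<noteq> 0 \<and> a > z a \<and> 0 > z a}. \<bar>z a\<bar>)"
  proof -
    have e: "{a. a \<noteq> 0 \<and> a > z a \<and> 0 > z a} = {v \<in> W0. z v < v \<and> z v < 0}" using inW unfolding W0_def by auto
    have "finite W0" unfolding W0_def by simp
    then show ?thesis unfolding e by (rule sum.inter_filter[symmetric])
  qed
  have d2: "(\<Sum>v\<in>W0. (if z v < v \<and> v < 0 then \<bar>v\<bar> else 0)) = (\<Sum>a\<in>{a. 0 > a \<and> a > z a}. \<bar>a\<bar>)"
  proof -
    have e: "{a. 0 > a \<and> a > z a} = {v \<in> W0. z v < v \<and> v < 0}" using inW unfolding W0_def by auto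
    have "finite W0" unfolding W0_def by simp
    then show ?thesis unfolding e by (rule sum.inter_filter[symmetric])
  qed
  have "(\<Sum>v\<in>W0. g v) = (\<Sum>v\<in>W0. (if z v < v \<and> z v < 0 then \<bar>z v\<bar> else 0)) - (\<Sum>v\<in>W0. (if z v < v \<and> v < 0 then \<bar>v\<bar> else 0))"
    unfolding g_def by (simp add: sum_subtractf)
  then show ?thesis using a b c d1 d2 by simp
qed


lemma L_inv:
  "invs K w - invs K u = - int (card {(p, q) \<in> {1..K} \<times> {1..K}. p < q \<and> u q < u p \<and> w p < w q})"
proof -
  define A where "A = {1..K}"
  have fA: "finite A" unfolding A_def by simp
  have "invs K w - invs K u = (\<Sum>p\<in>A. \<Sum>q\<in>A. of_bool (p < q \<and> w q < w p) - (of_bool (p < q \<and> u q < u p) :: int))"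
    unfolding invs_def A_def[symmetric] by (simp add: sum_subtractf del: sum_of_bool_eq)
  also have "\<dots> = (\<Sum>p\<in>A. \<Sum>q\<in>A. - of_bool (p < q \<and> u q < u p \<and> w p < w q))"
  proof (intro sum.cong refl)
    fix p q assume pq: "p \<in> A" "q \<in> A"
    have ne: "u p \<noteq> u q" "w p \<noteq> w q" if "p \<noteq> q" using sp_eq[OF su] sp_eq[OF sw] that by auto
    have "u p < u q \<Longrightarrow> p < q \<Longrightarrow> w p < w q" using PP_B[OF P, of p q] pq unfolding A_def by simp
    then show "of_bool (p < q \<and> w q < w p) - (of_bool (p < q \<and> u q < u p) :: int) = - of_bool (p < q \<and> u q < u p \<and> w p < w q)"
      using ne by (cases "p < q"; cases "u p < u q") (auto simp: of_bool_def)
  qed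
  also have "\<dots> = - (\<Sum>x\<in>A \<times> A. of_bool (case x of (p, q) \<Rightarrow> p < q \<and> u q < u p \<and> w p < w q))"
    by (simp add: sum_negf sum.cartesian_product case_prod_beta del: sum_of_bool_eq)
  also have "\<dots> = - int (card {(p, q) \<in> A \<times> A. p < q \<and> u q < u p \<and> w p < w q})"
  proof -
    have "(A \<times> A) \<inter> {x. case x of (p, q) \<Rightarrow> p < q \<and> u q < u p \<and> w p < w q} = {(p, q) \<in> A \<times> A. p < q \<and> u q < u p \<and> w p < w q}"
      by auto
    then show ?thesis using fA by simp
  qed
  finally show ?thesis unfolding A_def .
qed

definition "Np = {(p, q) \<in> {1..K} \<times> {1..K}. p < q \<and> u q < u p \<and> w p < w q}"
definition "NDD = {(p, q) \<in> {1..K} \<times> {1..K}. p < q \<and> u q < u p \<and> w p < w q \<and> w q < u q}"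
definition "NDF = {(p, q) \<in> {1..K} \<times> {1..K}. p < q \<and> u q < u p \<and> w p < w q \<and> w q = u q}"

lemma L_split: "card Np = card NDD + card NDF"
proof -
  have "Np = NDD \<union> NDF"
  proof (intro set_eqI iffI)
    fix x assume "x \<in> Np"
    then obtain p q where x: "x = (p, q)" "(p, q) \<in> Np" by (cases x) auto
    then have "q > 0" unfolding Np_def by auto
    then have "w q \<le> u q" using pos_le by simp
    then show "x \<in> NDD \<union> NDF" using x unfolding Np_def NDD_def NDF_def by auto
  qed (auto simp: Np_def NDD_def NDF_def)
  moreover have "NDD \<inter> NDF = {}" unfolding NDD_def NDF_def by auto
  moreover have "finite NDD" "finite NDF"
    by (rule finite_subset[of _ "{1..K} \<times> {1..K}"], auto simp: NDD_def NDF_def)+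
  ultimately show ?thesis by (simp add: card_Un_disjoint)
qed

lemma pos_of_down: assumes "z a < a" shows "inv u a > 0"
proof -
  have ua: "u (inv u a) = a" by (rule sp_inv_r[OF su])
  have "inv u a \<noteq> 0" using ua assms sp_zero[OF su] sp_zero[OF sz] by auto
  moreover have "\<not> inv u a < 0" using neg_pos[of "inv u a"] ua assms by auto
  ultimately show ?thesis by simp
qed

lemma inA: assumes "p > 0" "w p \<noteq> u p" shows "p \<in> {1..K}"
proof -
  have "p \<le> K"
  proof (rule ccontr)
    assume "\<not> p \<le> K"
    then have "u p = p" "z p = p" using bu bz assms unfolding bnd_def by auto
    then show False using assms by simp
  qed
  then show ?thesis using assms by simp
qed

lemma L_DD: "card NDD = card {(a, b). a \<noteq> 0 \<and> b \<noteq> 0 \<and> a < b \<and> a > z a \<and> b > z b \<and> z a > z b}"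
proof -
  define h where "h = (\<lambda>(p, q). (u q, u p))"
  have inj: "inj_on h NDD" unfolding h_def inj_on_def using sp_eq[OF su] by auto
  have im: "h ` NDD = {(a, b). a \<noteq> 0 \<and> b \<noteq> 0 \<and> a < b \<and> a > z a \<and> b > z b \<and> z a > z b}"
  proof (intro set_eqI iffI)
    fix x assume "x \<in> h ` NDD"
    then obtain p q where pq: "(p, q) \<in> NDD" "x = (u q, u p)" unfolding h_def by auto
    then have "p > 0" "q > 0" unfolding NDD_def by auto
    then have "u p \<noteq> 0" "u q \<noteq> 0" using sp_nz[OF su] by auto
    then show "x \<in> {(a, b). a \<noteq> 0 \<and> b \<noteq> 0 \<and> a < b \<and> a > z a \<and> b > z b \<and> z a > z b}"
      using pq unfolding NDD_def by auto
  next
    fix x assume x: "x \<in> {(a, b). a \<noteq> 0 \<and> b \<noteq> 0 \<and> a < b \<and> a > z a \<and> b > z b \<and> z a > z b}"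
    then obtain a b where ab: "x = (a, b)" "a \<noteq> 0" "b \<noteq> 0" "a < b" "a > z a" "b > z b" "z a > z b" by auto
    define p where "p = inv u b"
    define q where "q = inv u a"
    have up: "u p = b" "u q = a" unfolding p_def q_def by (rule sp_inv_r[OF su])+
    have pos: "p > 0" "q > 0" unfolding p_def q_def using pos_of_down ab by auto
    have pA: "p \<in> {1..K}" "q \<in> {1..K}" using inA[of p] inA[of q] pos up ab by auto
    have "p \<noteq> q" using up ab by auto
    moreover have "\<not> q < p"
    proof
      assume "q < p"
      then have "w q < w p" using PP_B[OF P, of q p] pos up ab by simp
      then show False using up ab by simp
    qed
    ultimately have "p < q" by simp
    then have "(p, q) \<in> NDD" unfolding NDD_def using pA up ab by auto
    moreover have "h (p, q) = x" unfolding h_def using up ab by simp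
    ultimately show "x \<in> h ` NDD" by force
  qed
  show ?thesis using card_image[OF inj] im by simp
qed


definition "cr f = card {x \<in> {-K..K}. z x < f \<and> f < x}"

lemma L_DF: "card NDF = card {(a, b). 0 < a \<and> a < b \<and> a = z a \<and> a > z b}"
proof -
  define A where "A = {1..K}"
  define W where "W = {-K..K}"
  define Fq where "Fq = {q \<in> A. w q = u q}"
  define Ps where "Ps q = {p \<in> A. w p < u q \<and> u q < u p}" for q
  define Fa where "Fa = {a \<in> A. z a = a}"
  define Bs where "Bs a = {b \<in> W. z b < a \<and> a < b}" for a
  have fA: "finite A" unfolding A_def by simp
  have fFq: "finite Fq" unfolding Fq_def using fA by simp
  have fFa: "finite Fa" unfolding Fa_def using fA by simp
  have fPs: "finite (Ps q)" for q unfolding Ps_def using fA by simp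
  have fBs: "finite (Bs a)" for a unfolding Bs_def by (rule finite_subset[of _ W]) (auto simp: W_def)
  have e1: "NDF = (\<lambda>(q, p). (p, q)) ` Sigma Fq Ps"
  proof (intro set_eqI iffI)
    fix x assume "x \<in> NDF"
    then obtain p q where x: "x = (p, q)" "(p, q) \<in> NDF" by (cases x) auto
    then have "q \<in> Fq" "p \<in> Ps q" unfolding NDF_def Fq_def Ps_def A_def by auto
    then show "x \<in> (\<lambda>(q, p). (p, q)) ` Sigma Fq Ps" using x by force
  next
    fix x assume "x \<in> (\<lambda>(q, p). (p, q)) ` Sigma Fq Ps"
    then obtain p q where x: "x = (p, q)" "q \<in> Fq" "p \<in> Ps q" by auto
    then have pq: "p \<in> A" "q \<in> A" "w q = u q" "w p < u q" "u q < u p" unfolding Fq_def Ps_def by auto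
    have "p \<noteq> q" using pq by auto
    moreover have "\<not> q < p"
    proof
      assume "q < p"
      then have "w q < w p" using PP_B[OF P, of q p] pq unfolding A_def by simp
      then show False using pq by simp
    qed
    ultimately have "p < q" by simp
    then show "x \<in> NDF" using x pq unfolding NDF_def A_def by auto
  qed
  have c1: "card NDF = (\<Sum>q\<in>Fq. card (Ps q))"
  proof -
    have "inj_on (\<lambda>(q, p). (p, q)) (Sigma Fq Ps)" by (auto simp: inj_on_def)
    then have "card NDF = card (Sigma Fq Ps)" unfolding e1 by (rule card_image)
    also have "\<dots> = (\<Sum>q\<in>Fq. card (Ps q))" using fFq fPs by (simp add: card_SigmaI)
    finally show ?thesis .
  qed
  have c2: "card (Ps q) = cr (u q)" for q
  proof -
    have "Ps q = {p \<in> W. z (u p) < u q \<and> u q < u p}"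
    proof (intro set_eqI iffI)
      fix p assume "p \<in> Ps q" then show "p \<in> {p \<in> W. z (u p) < u q \<and> u q < u p}" unfolding Ps_def A_def W_def by auto
    next
      fix p assume p: "p \<in> {p \<in> W. z (u p) < u q \<and> u q < u p}"
      have "p \<noteq> 0" using p sp_zero[OF su] sp_zero[OF sz] by auto
      moreover have "\<not> p < 0" using neg_pos[of p] p by auto
      ultimately show "p \<in> Ps q" using p unfolding Ps_def A_def W_def by auto
    qed
    then show ?thesis unfolding cr_def W_def using card_window_perm[OF su bu, of "\<lambda>v. z v < u q \<and> u q < v"] by simp
  qed
  have e2: "{(a, b). 0 < a \<and> a < b \<and> a = z a \<and> a > z b} = Sigma Fa Bs"
  proof (intro set_eqI iffI)
    fix x assume "x \<in> {(a, b). 0 < a \<and> a < b \<and> a = z a \<and> a > z b}"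
    then obtain a b where x: "x = (a, b)" "0 < a" "a < b" "a = z a" "a > z b" by auto
    have "\<bar>b\<bar> \<le> K" using fixout[of b] x by force
    then show "x \<in> Sigma Fa Bs" using x unfolding Fa_def Bs_def A_def W_def by auto
  next
    fix x assume "x \<in> Sigma Fa Bs"
    then show "x \<in> {(a, b). 0 < a \<and> a < b \<and> a = z a \<and> a > z b}" unfolding Fa_def Bs_def A_def by auto
  qed
  have c3: "card (Sigma Fa Bs) = (\<Sum>a\<in>Fa. cr a)"
    using fFa fBs by (simp add: card_SigmaI Bs_def cr_def W_def)
  have c4: "cr (u q) = cr \<bar>u q\<bar>" if "q \<in> Fq" for q
  proof -
    have "z (u q) = u q" using that unfolding Fq_def by simp
    then show ?thesis unfolding cr_def using flow_neg[OF sz bz, of "u q"] by (cases "u q \<ge> 0") auto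
  qed
  have bij: "bij_betw (\<lambda>q. \<bar>u q\<bar>) Fq Fa"
  proof (rule bij_betwI')
    fix x y assume xy: "x \<in> Fq" "y \<in> Fq"
    show "(\<bar>u x\<bar> = \<bar>u y\<bar>) = (x = y)"
    proof
      assume "\<bar>u x\<bar> = \<bar>u y\<bar>"
      then have "u x = u y \<or> u x = u (- y)" using sp_odd[OF su, of y] by (auto simp: abs_eq_iff)
      then have "x = y \<or> x = - y" using sp_eq[OF su] by auto
      then show "x = y" using xy unfolding Fq_def A_def by auto
    qed simp
  next
    fix x assume x: "x \<in> Fq"
    then have "x \<in> A" "z (u x) = u x" unfolding Fq_def by auto
    then have "\<bar>u x\<bar> \<le> K" "u x \<noteq> 0" using bnd_window[OF su bu, of x] sp_nz[OF su, of x] unfolding A_def by auto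
    moreover have "z \<bar>u x\<bar> = \<bar>u x\<bar>" using \<open>z (u x) = u x\<close> sp_odd[OF sz, of "u x"] by (cases "u x \<ge> 0") auto
    ultimately show "\<bar>u x\<bar> \<in> Fa" unfolding Fa_def A_def by auto
  next
    fix a assume a: "a \<in> Fa"
    then have a1: "a \<in> {-K..K} - {0}" "z a = a" unfolding Fa_def A_def by auto
    then obtain y where y: "y \<in> {-K..K} - {0}" "u y = a" using sp_window_image[OF su bu] by (metis imageE)
    define q where "q = \<bar>y\<bar>"
    have uq: "u q = a \<or> u q = - a" using y sp_odd[OF su, of y] unfolding q_def by (cases "y \<ge> 0") auto
    have "z (u q) = u q" using uq a1 sp_odd[OF sz, of a] by auto
    moreover have "q \<in> A" using y unfolding q_def A_def by auto
    ultimately have "q \<in> Fq" unfolding Fq_def by simp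
    moreover have "a = \<bar>u q\<bar>" using uq a unfolding Fa_def A_def by auto
    ultimately show "\<exists>x\<in>Fq. a = \<bar>u x\<bar>" by blast
  qed
  have "(\<Sum>q\<in>Fq. card (Ps q)) = (\<Sum>q\<in>Fq. cr \<bar>u q\<bar>)" using c2 c4 by simp
  also have "\<dots> = (\<Sum>a\<in>Fa. cr a)" by (rule sum.reindex_bij_betw[OF bij])
  finally show ?thesis using c1 c3 e2 by simp
qed


lemma L_formula:
  "blen w - blen u =
     (\<Sum>a\<in>{a. a \<noteq> 0 \<and> a > z a \<and> 0 > z a}. \<bar>z a\<bar>)
     - int (card {(a, b). 0 < a \<and> a < b \<and> a = z a \<and> a > z b})
     - int (card {(a, b). a \<noteq> 0 \<and> b \<noteq> 0 \<and> a < b \<and> a > z a \<and> b > z b \<and> z a > z b})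
     - (\<Sum>a\<in>{a. 0 > a \<and> a > z a}. \<bar>a\<bar>)"
proof -
  have "blen w = invs K w + negs K w" by (rule blen_win[OF sw bw])
  moreover have "blen u = invs K u + negs K u" by (rule blen_win[OF su bu])
  moreover have "invs K w - invs K u = - int (card Np)" using L_inv unfolding Np_def .
  ultimately show ?thesis using L_neg L_split L_DD L_DF by simp
qed

end

lemma formula_any:
  assumes sz: "signed_perm \<zeta>" and su: "signed_perm u" and P: "PP u (\<zeta> \<circ> u)"
  shows "blen (\<zeta> \<circ> u) - blen u =
           (\<Sum>a\<in>{a. a \<noteq> 0 \<and> a > \<zeta> a \<and> 0 > \<zeta> a}. \<bar>\<zeta> a\<bar>)
           - int (card {(a, b). 0 < a \<and> a < b \<and> a = \<zeta> a \<and> a > \<zeta> b})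
           - int (card {(a, b). a \<noteq> 0 \<and> b \<noteq> 0 \<and> a < b \<and> a > \<zeta> a \<and> b > \<zeta> b \<and> \<zeta> a > \<zeta> b})
           - (\<Sum>a\<in>{a. 0 > a \<and> a > \<zeta> a}. \<bar>a\<bar>)"
proof -
  obtain K1 where K1: "K1 \<ge> 0" "bnd K1 u" using sp_bnd[OF su] by blast
  obtain K2 where K2: "K2 \<ge> 0" "bnd K2 \<zeta>" using sp_bnd[OF sz] by blast
  define K where "K = max K1 K2"
  have "bnd K u" "bnd K \<zeta>" "K \<ge> 0" using K1 K2 bnd_mono unfolding K_def by auto
  then interpret fsetup \<zeta> u K using sz su P by unfold_locales auto
  show ?thesis by (rule L_formula)
qed

lemma Lag_eq:
  assumes sz: "signed_perm \<zeta>"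
  shows "Lag \<zeta> =
           (\<Sum>a\<in>{a. a \<noteq> 0 \<and> a > \<zeta> a \<and> 0 > \<zeta> a}. \<bar>\<zeta> a\<bar>)
           - int (card {(a, b). 0 < a \<and> a < b \<and> a = \<zeta> a \<and> a > \<zeta> b})
           - int (card {(a, b). a \<noteq> 0 \<and> b \<noteq> 0 \<and> a < b \<and> a > \<zeta> a \<and> b > \<zeta> b \<and> \<zeta> a > \<zeta> b})
           - (\<Sum>a\<in>{a. 0 > a \<and> a > \<zeta> a}. \<bar>a\<bar>)"
proof -
  obtain u where u: "signed_perm u" "PP u (\<zeta> \<circ> u)"
    using construct[OF sz sz] by auto
  have "bruhat0 u (\<zeta> \<circ> u)" unfolding bruhat0_iff using u sp_comp[OF sz u(1)] by simp
  then have ex: "\<exists>d. \<exists>u. signed_perm u \<and> bruhat0 u (\<zeta> \<circ> u) \<and> d = blen (\<zeta> \<circ> u) - blen u" using u by blast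
  have "\<exists>u. signed_perm u \<and> bruhat0 u (\<zeta> \<circ> u) \<and> Lag \<zeta> = blen (\<zeta> \<circ> u) - blen u"
    unfolding Lag_def by (rule someI_ex[OF ex])
  then obtain v where v: "signed_perm v" "bruhat0 v (\<zeta> \<circ> v)" "Lag \<zeta> = blen (\<zeta> \<circ> v) - blen v" by blast
  have "PP v (\<zeta> \<circ> v)" using bruhat0_PP[OF v(2)] .
  then show ?thesis using formula_any[OF sz v(1)] v(3) by simp
qed

theorem mainTheorem10:
  fixes \<eta> \<zeta> :: "int \<Rightarrow> int"
  assumes "signed_perm \<eta>" and "signed_perm \<zeta>"
  shows "(lag_le \<eta> \<zeta> \<longleftrightarrow>
           (\<forall>a. a \<noteq> 0 \<and> a > \<eta> a \<longrightarrow> \<eta> a \<ge> \<zeta> a) \<and>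
           (\<forall>a b. a \<noteq> 0 \<and> b \<noteq> 0 \<and> a < b \<and> a > \<zeta> a \<and> b > \<zeta> b \<and> \<zeta> a < \<zeta> b
                 \<longrightarrow> \<eta> a < \<eta> b))
       \<and> Lag \<zeta> =
           (\<Sum>a\<in>{a. a \<noteq> 0 \<and> a > \<zeta> a \<and> 0 > \<zeta> a}. \<bar>\<zeta> a\<bar>)
           - int (card {(a, b). 0 < a \<and> a < b \<and> a = \<zeta> a \<and> a > \<zeta> b})
           - int (card {(a, b). a \<noteq> 0 \<and> b \<noteq> 0 \<and> a < b \<and> a > \<zeta> a \<and> b > \<zeta> b \<and> \<zeta> a > \<zeta> b})
           - (\<Sum>a\<in>{a. 0 > a \<and> a > \<zeta> a}. \<bar>a\<bar>)"
  using lag_le_iff[OF assms] Lag_eq[OF assms(2)] by simp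


end
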